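(* The compact wedges $\mathcal{S}_0$ and $\mathcal{S}_1$ are homotopy equivalent to the bouquets $\mathcal{WS}_0$ and $\mathcal{WS}_1$, respectively.
   Context: Let $n\ge1$, $\mathcal{S}=S^n$. $\mathcal{S}_0=\bigvee_{j\ge1}\mathcal{S}_0(j)$ is a compact (Hawaiian-earring type) wedge in $\mathbb{R}^{2n+2}$ of countably many copies $\mathcal{S}_0(j)$ of $S^n\times S^n$ at a common basepoint (the origin), factors meeting pairwise only at the basepoint, diameters tending to $0$. $\mathcal{S}_1=\bigvee_{j\ge1}\mathcal{S}_1(j)$ is the analogous compact wedge with $\mathcal{S}_1(1)$ a copy of $S^n$ and $\mathcal{S}_1(j)\cong S^n\times S^n$ for $j\ge2$. $\mathcal{WS}_0$ (resp. $\mathcal{WS}_1$) is the compact subspace of $\mathbb{R}^{2n+2}$ obtained as follows: take an arc $\bar A$ containing points $p_1,p_2,\dots$ in order, converging to an endpoint $p_\infty$ of $\bar A$, with $a_i$ the subarc from $p_i$ to $p_{i+1}$ and $\bar A=\bigcup_i a_i\cup\{p_\infty\}$; at each $p_j$ attach a copy of the factor $\mathcal{S}_0(j)$ (resp. $\mathcal{S}_1(j)$) meeting $\bar A$ only at $p_j$, the attached factors pairwise disjoint and with diameters tending to $0$. *)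

theory Defs
  imports "HOL-Analysis.Analysis"
begin

text \<open>A compact (Hawaiian-earring type) wedge, at the origin, of sets K j (j \<ge> 1),
  where K j is required to be a copy of the j-th factor (predicate F j).\<close>
definition compact_wedge :: "(nat \<Rightarrow> 'a::euclidean_space set \<Rightarrow> bool) \<Rightarrow> 'a set \<Rightarrow> bool" where
  "compact_wedge F W \<longleftrightarrow>
     (\<exists>K :: nat \<Rightarrow> 'a set.
        (\<forall>j\<ge>1. F j (K j) \<and> 0 \<in> K j) \<and>
        (\<forall>i\<ge>1. \<forall>j\<ge>1. i \<noteq> j \<longrightarrow> K i \<inter> K j = {0}) \<and>
        (\<lambda>j. diameter (K j)) \<longlonglongrightarrow> 0 \<and>
        W = (\<Union>j\<in>{1..}. K j))"

text \<open>The bouquet along an arc: arc g from p_1 = g(t 1) = g 0 to p_inf = g 1,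
  points p_j = g (t j) in order converging to g 1; at p_j a copy L j of the
  j-th factor is attached, meeting the arc only at p_j.\<close>
definition arc_bouquet :: "(nat \<Rightarrow> 'a::euclidean_space set \<Rightarrow> bool) \<Rightarrow> 'a set \<Rightarrow> bool" where
  "arc_bouquet F W \<longleftrightarrow>
     (\<exists>(g :: real \<Rightarrow> 'a) (t :: nat \<Rightarrow> real) (L :: nat \<Rightarrow> 'a set).
        arc g \<and> t 1 = 0 \<and> (\<forall>i\<ge>1. t i < t (Suc i)) \<and> t \<longlonglongrightarrow> 1 \<and>
        (\<forall>j\<ge>1. F j (L j) \<and> L j \<inter> path_image g = {g (t j)}) \<and>
        (\<forall>i\<ge>1. \<forall>j\<ge>1. i \<noteq> j \<longrightarrow> L i \<inter> L j = {}) \<and>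
        (\<lambda>j. diameter (L j)) \<longlonglongrightarrow> 0 \<and>
        W = path_image g \<union> (\<Union>j\<in>{1..}. L j))"

end

theory Submission
  imports Defs
begin

lemma finite_common_delta:
  assumes "finite F" "\<forall>j\<in>F. \<exists>d>0. Q j (d::real)"
    "\<And>j d d'. Q j d \<Longrightarrow> 0 < d' \<Longrightarrow> d' \<le> d \<Longrightarrow> Q j d'"
  shows "\<exists>d>0. \<forall>j\<in>F. Q j d"
  using assms(1,2)
proof (induction F rule: finite_induct)
  case empty then show ?case by (auto intro: exI[of _ 1])
next
  case (insert a F)
  then obtain d1 where d1: "d1 > 0" "\<forall>j\<in>F. Q j d1" by auto
  obtain d2 where d2: "d2 > 0" "Q a d2" using insert by auto
  show ?case
    apply (rule exI[of _ "min d1 d2"])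
    using d1 d2 assms(3) by (auto simp: min_le_iff_disj)
qed

lemma continuous_on_pieces:
  fixes h :: "'x::metric_space \<Rightarrow> 'y::metric_space"
  assumes ZP: "X = Z \<union> (\<Union>j\<in>I. P j)" and I: "I \<subseteq> (UNIV::nat set)"
    and clZ: "closed Z" and clP: "\<And>j. j \<in> I \<Longrightarrow> closed (P j)"
    and cZ: "continuous_on Z h" and cP: "\<And>j. j \<in> I \<Longrightarrow> continuous_on (P j) h"
    and small: "\<And>e. e > 0 \<Longrightarrow> \<exists>m. \<forall>j\<in>I. j \<ge> m \<longrightarrow>
                   (\<forall>x\<in>P j. \<exists>z\<in>Z. dist x z < e \<and> dist (h x) (h z) < e)"
  shows "continuous_on X h"
  unfolding continuous_on_iff
proof (intro ballI allI impI)
  fix x e assume xX: "x \<in> X" and e: "(0::real) < e"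
  have fin: "\<exists>d>0. \<forall>j\<in>{j\<in>I. j < m}. \<forall>x'\<in>P j. dist x' x < d \<longrightarrow> dist (h x') (h x) < e" for m
  proof (rule finite_common_delta)
    show "finite {j\<in>I. j < m}" by auto
    show "\<forall>j\<in>{j\<in>I. j < m}. \<exists>d>0. \<forall>x'\<in>P j. dist x' x < d \<longrightarrow> dist (h x') (h x) < e"
    proof
      fix j assume j: "j \<in> {j\<in>I. j < m}"
      show "\<exists>d>0. \<forall>x'\<in>P j. dist x' x < d \<longrightarrow> dist (h x') (h x) < e"
      proof (cases "x \<in> P j")
        case True
        then show ?thesis using cP[of j] j e unfolding continuous_on_iff by auto
      next
        case False
        have "open (- P j)" using clP j by auto
        then obtain d where "d > 0" "ball x d \<subseteq> - P j" using False
          by (meson ComplI open_contains_ball_eq)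
        then show ?thesis by (auto intro!: exI[of _ d] simp: dist_commute subset_iff)
      qed
    qed
  qed auto
  show "\<exists>d>0. \<forall>x'\<in>X. dist x' x < d \<longrightarrow> dist (h x') (h x) < e"
  proof (cases "x \<in> Z")
    case True
    obtain d0 where d0: "d0 > 0" "\<forall>x'\<in>Z. dist x' x < d0 \<longrightarrow> dist (h x') (h x) < e/2"
      using cZ True e unfolding continuous_on_iff by (meson half_gt_zero)
    obtain m where m: "\<forall>j\<in>I. j \<ge> m \<longrightarrow> (\<forall>x\<in>P j. \<exists>z\<in>Z. dist x z < min (d0/2) (e/2) \<and> dist (h x) (h z) < min (d0/2) (e/2))"
      using small[of "min (d0/2) (e/2)"] d0 e by auto
    obtain d1 where d1: "d1 > 0" "\<forall>j\<in>{j\<in>I. j < m}. \<forall>x'\<in>P j. dist x' x < d1 \<longrightarrow> dist (h x') (h x) < e"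
      using fin by blast
    show ?thesis
    proof (intro exI[of _ "min d1 (d0/2)"] conjI ballI impI)
      show "0 < min d1 (d0/2)" using d0 d1 by auto
      fix x' assume x': "x' \<in> X" "dist x' x < min d1 (d0/2)"
      show "dist (h x') (h x) < e"
      proof (cases "x' \<in> Z")
        case True
        have "dist x' x < d0" using x' d0 by linarith
        then show ?thesis using d0 True e by force
      next
        case False
        then obtain j where j: "j \<in> I" "x' \<in> P j" using x' ZP by auto
        show ?thesis
        proof (cases "j < m")
          case True then show ?thesis using d1 j x' by auto
        next
          case False
          then obtain z where z: "z \<in> Z" "dist x' z < min (d0/2) (e/2)" "dist (h x') (h z) < min (d0/2) (e/2)"
            using m j by (meson not_le)
          have "dist z x < d0" using z x' dist_triangle[of z x x'] by (simp add: dist_commute)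
          then have "dist (h z) (h x) < e/2" using d0 z by auto
          then show ?thesis using z dist_triangle[of "h x'" "h x" "h z"] by auto
        qed
      qed
    qed
  next
    case False
    have "open (- Z)" using clZ by auto
    then obtain d0 where d0: "d0 > 0" "ball x d0 \<subseteq> - Z" using False
      by (meson ComplI open_contains_ball_eq)
    obtain m where m: "\<forall>j\<in>I. j \<ge> m \<longrightarrow> (\<forall>x\<in>P j. \<exists>z\<in>Z. dist x z < d0/2 \<and> dist (h x) (h z) < d0/2)"
      using small[of "d0/2"] d0 by auto
    obtain d1 where d1: "d1 > 0" "\<forall>j\<in>{j\<in>I. j < m}. \<forall>x'\<in>P j. dist x' x < d1 \<longrightarrow> dist (h x') (h x) < e"
      using fin by blast
    show ?thesis
    proof (intro exI[of _ "min d1 (d0/2)"] conjI ballI impI)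
      show "0 < min d1 (d0/2)" using d0 d1 by auto
      fix x' assume x': "x' \<in> X" "dist x' x < min d1 (d0/2)"
      have "x' \<notin> Z" using x' d0 by (auto simp: dist_commute subset_iff)
      then obtain j where j: "j \<in> I" "x' \<in> P j" using x' ZP by auto
      show "dist (h x') (h x) < e"
      proof (cases "j < m")
        case True then show ?thesis using d1 j x' by auto
      next
        case False
        then obtain z where z: "z \<in> Z" "dist x' z < d0/2"
          using m j by (meson not_le)
        have "dist x z < d0" using z x' dist_triangle[of x z x'] by (simp add: dist_commute)
        then show ?thesis using d0 z by (auto simp: subset_iff)
      qed
    qed
  qed
qed

lemma homotopic_canonI:
  assumes "continuous_on ({0..1::real} \<times> S) h" "h ` ({0..1} \<times> S) \<subseteq> T"
    "\<And>x. x \<in> S \<Longrightarrow> h (0, x) = p x" "\<And>x. x \<in> S \<Longrightarrow> h (1, x) = q x"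
  shows "homotopic_with_canon (\<lambda>x. True) S T p q"
  apply (subst homotopic_with) apply blast
proof (rule exI[of _ h], intro conjI)
  show "continuous_map (prod_topology (top_of_set {0..1}) (top_of_set S)) (top_of_set T) h"
    using assms(1,2) by (simp add: image_subset_iff Pi_iff)
qed (use assms in auto)

lemma continuous_on_scale_vanish:
  fixes k :: "'x::metric_space \<Rightarrow> real" and v :: "'x \<Rightarrow> 'v::real_normed_vector"
  assumes cv: "continuous_on D v" and ck: "continuous_on {x\<in>D. v x \<noteq> 0} k"
    and kb: "\<And>x. x \<in> D \<Longrightarrow> \<bar>k x\<bar> \<le> 1"
  shows "continuous_on D (\<lambda>x. k x *\<^sub>R v x)"
  unfolding continuous_on_iff
proof (intro ballI allI impI)
  fix x e assume x: "x \<in> D" and e: "(0::real) < e"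
  show "\<exists>d>0. \<forall>x'\<in>D. dist x' x < d \<longrightarrow> dist (k x' *\<^sub>R v x') (k x *\<^sub>R v x) < e"
  proof (cases "v x = 0")
    case True
    obtain d where d: "d > 0" "\<forall>x'\<in>D. dist x' x < d \<longrightarrow> dist (v x') (v x) < e"
      using cv x e unfolding continuous_on_iff by blast
    show ?thesis
    proof (intro exI[of _ d] conjI ballI impI)
      fix x' assume "x' \<in> D" "dist x' x < d"
      then have "norm (v x') < e" using d True by (auto simp: dist_norm)
      moreover have "norm (k x' *\<^sub>R v x') \<le> norm (v x')"
        using kb[OF \<open>x' \<in> D\<close>] by (simp add: mult_left_le_one_le)
      ultimately show "dist (k x' *\<^sub>R v x') (k x *\<^sub>R v x) < e" using True by (simp add: dist_norm)
    qed (use d in auto)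
  next
    case False
    obtain d0 where d0: "d0 > 0" "\<forall>x'\<in>D. dist x' x < d0 \<longrightarrow> dist (v x') (v x) < norm (v x)"
      using cv x False unfolding continuous_on_iff by (meson zero_less_norm_iff)
    have d0': "\<forall>x'\<in>D. dist x' x < d0 \<longrightarrow> v x' \<noteq> 0"
      using d0 by (auto simp: dist_norm)
    have "continuous_on {x\<in>D. v x \<noteq> 0} (\<lambda>x. k x *\<^sub>R v x)"
      by (intro continuous_intros ck continuous_on_subset[OF cv]) auto
    then obtain d1 where d1: "d1 > 0" "\<forall>x'\<in>{x\<in>D. v x \<noteq> 0}. dist x' x < d1 \<longrightarrow> dist (k x' *\<^sub>R v x') (k x *\<^sub>R v x) < e"
      using x False e unfolding continuous_on_iff by (metis (mono_tags, lifting) mem_Collect_eq)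
    show ?thesis
      apply (rule exI[of _ "min d0 d1"]) using d0 d0' d1 by auto
  qed
qed

definition has_chart :: "'a::metric_space set \<Rightarrow> 'a \<Rightarrow> ('a \<Rightarrow> 'c::real_normed_vector) \<Rightarrow> ('c \<Rightarrow> 'a) \<Rightarrow> 'a set \<Rightarrow> bool" where
  "has_chart X x0 \<phi> \<psi> N \<longleftrightarrow> N \<subseteq> X \<and> compact N \<and> x0 \<in> N \<and> homeomorphism N (\<phi> ` N) \<phi> \<psi> \<and>
     convex (\<phi> ` N) \<and> (\<forall>x\<in>N. norm (\<phi> x - \<phi> x0) \<le> 1) \<and>
     openin (top_of_set X) {x\<in>N. norm (\<phi> x - \<phi> x0) < 1}"

locale chartloc =
  fixes K :: "'a::real_normed_vector set" and \<phi> :: "'a \<Rightarrow> 'c::real_normed_vector" and \<psi> N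
  assumes Kc: "compact K" and ch: "has_chart K 0 \<phi> \<psi> N"
begin

definition "c = \<phi> 0"
definition "\<rho> x = (if x \<in> N then norm (\<phi> x - c) else 1)"
definition "R k x = (if x \<in> N then \<psi> (c + k *\<^sub>R (\<phi> x - c)) else x)"
definition "Op = {x\<in>N. norm (\<phi> x - c) < 1}"

lemma NK: "N \<subseteq> K" and Nc: "compact N" and N0: "0 \<in> N" and hom: "homeomorphism N (\<phi> ` N) \<phi> \<psi>"
  and cvx: "convex (\<phi> ` N)" and nle: "\<And>x. x \<in> N \<Longrightarrow> norm (\<phi> x - c) \<le> 1"
  and Oopen: "openin (top_of_set K) Op"
  using ch by (auto simp: has_chart_def c_def Op_def)

lemma closed_KO: "closed (K - Op)"
proof -
  have "closedin (top_of_set K) (K - Op)" using Oopen by auto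
  then show ?thesis using Kc compact_imp_closed closedin_closed_trans by blast
qed

lemma rho_cont: "continuous_on K \<rho>"
proof -
  have "K = N \<union> (K - Op)" using NK Op_def by auto
  moreover have "continuous_on N \<rho>"
  proof -
    have cphi: "continuous_on N \<phi>" using hom by (simp add: homeomorphism_def)
    have "continuous_on N (\<lambda>x. norm (\<phi> x - c))"
      by (intro continuous_on_norm continuous_on_diff cphi continuous_on_const)
    then show ?thesis by (rule continuous_on_eq) (simp add: \<rho>_def)
  qed
  moreover have "continuous_on (K - Op) \<rho>"
  proof -
    have "\<rho> x = 1" if "x \<in> K - Op" for x using that nle[of x] by (auto simp: \<rho>_def Op_def)
    then show ?thesis by (intro continuous_on_eq[OF continuous_on_const]) auto
  qed
  ultimately show ?thesis
    using continuous_on_closed_Un[OF compact_imp_closed[OF Nc] closed_KO] by metis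
qed

lemma rho_range: "0 \<le> \<rho> x" "\<rho> x \<le> 1"
  using nle[of x] by (auto simp: \<rho>_def)

lemma rho0: "\<rho> 0 = 0" using N0 by (simp add: \<rho>_def c_def)

lemma rho_eq0: "x \<in> K \<Longrightarrow> \<rho> x = 0 \<Longrightarrow> x = 0"
  using hom N0 unfolding \<rho>_def c_def
  by (metis (no_types, lifting) eq_iff_diff_eq_0 homeomorphism_apply1 norm_eq_zero zero_neq_one)

lemma psi_c: "\<psi> c = 0" using hom N0 by (simp add: c_def homeomorphism_apply1)

lemma R_in: assumes "x \<in> K" "0 \<le> k" "k \<le> 1" shows "R k x \<in> K"
proof (cases "x \<in> N")
  case True
  have "c + k *\<^sub>R (\<phi> x - c) = (1 - k) *\<^sub>R c + k *\<^sub>R \<phi> x" by (simp add: algebra_simps)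
  also have "\<dots> \<in> \<phi> ` N" using cvx assms True N0 unfolding c_def
    by (intro convexD_alt) auto
  finally have "\<psi> (c + k *\<^sub>R (\<phi> x - c)) \<in> N" using hom by (auto simp: homeomorphism_def)
  then show ?thesis using True NK by (auto simp: R_def)
qed (use assms in \<open>auto simp: R_def\<close>)

lemma R1: "R 1 x = x" using hom by (auto simp: R_def homeomorphism_apply1)
lemma R0: "x \<in> N \<Longrightarrow> R 0 x = 0" by (simp add: R_def psi_c)
lemma R_at0: "R k 0 = 0" using N0 by (simp add: R_def c_def psi_c[unfolded c_def])
lemma R_rho1: "x \<in> K \<Longrightarrow> \<rho> x = 1 \<Longrightarrow> R 1 x = x" by (rule R1)

lemma R_cont:
  fixes D :: "'z::metric_space set" and p :: "'z \<Rightarrow> 'a" and \<kappa> :: "'z \<Rightarrow> real"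
  assumes D: "closed D" and cp: "continuous_on D p" and pD: "p ` D \<subseteq> K"
    and ck: "continuous_on {z\<in>D. p z \<in> N \<and> p z \<noteq> 0} \<kappa>"
    and kr: "\<And>z. z \<in> D \<Longrightarrow> 0 \<le> \<kappa> z \<and> \<kappa> z \<le> 1"
    and k1: "\<And>z. z \<in> D \<Longrightarrow> \<rho> (p z) = 1 \<Longrightarrow> \<kappa> z = 1"
  shows "continuous_on D (\<lambda>z. R (\<kappa> z) (p z))"
proof -
  let ?D1 = "{z\<in>D. p z \<in> N}" and ?D2 = "{z\<in>D. p z \<in> K - Op}"
  have "closed (D \<inter> p -` N)"
    by (rule continuous_closed_preimage[OF cp D]) (use Nc compact_imp_closed in auto)
  moreover have "D \<inter> p -` N = ?D1" by blast
  ultimately have cl1: "closed ?D1" by simp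
  have "closed (D \<inter> p -` (K - Op))"
    by (rule continuous_closed_preimage[OF cp D closed_KO])
  moreover have "D \<inter> p -` (K - Op) = ?D2" by blast
  ultimately have cl2: "closed ?D2" by simp
  have DU: "D = ?D1 \<union> ?D2" using pD Op_def by auto
  have c1: "continuous_on ?D1 (\<lambda>z. R (\<kappa> z) (p z))"
  proof -
    have cphi: "continuous_on N \<phi>" using hom by (simp add: homeomorphism_def)
    have cp1: "continuous_on ?D1 p" using cp by (rule continuous_on_subset) auto
    have "continuous_on ?D1 (\<phi> \<circ> p)"
      by (rule continuous_on_compose[OF cp1 continuous_on_subset[OF cphi]]) auto
    then have v: "continuous_on ?D1 (\<lambda>z. \<phi> (p z) - c)"
      by (simp add: o_def continuous_on_diff continuous_on_const)
    have "{z\<in>?D1. \<phi> (p z) - c \<noteq> 0} \<subseteq> {z\<in>D. p z \<in> N \<and> p z \<noteq> 0}"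
      using N0 by (auto simp: c_def)
    then have "continuous_on ?D1 (\<lambda>z. \<kappa> z *\<^sub>R (\<phi> (p z) - c))"
      using kr by (intro continuous_on_scale_vanish[OF v] continuous_on_subset[OF ck]) auto
    then have cc: "continuous_on ?D1 (\<lambda>z. c + \<kappa> z *\<^sub>R (\<phi> (p z) - c))"
      by (simp add: continuous_on_add continuous_on_const)
    have mem: "c + \<kappa> z *\<^sub>R (\<phi> (p z) - c) \<in> \<phi> ` N" if "z \<in> ?D1" for z
    proof -
      have "c + \<kappa> z *\<^sub>R (\<phi> (p z) - c) = (1 - \<kappa> z) *\<^sub>R c + \<kappa> z *\<^sub>R \<phi> (p z)" by (simp add: algebra_simps)
      also have "\<dots> \<in> \<phi> ` N" using cvx kr[of z] that N0 unfolding c_def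
        by (intro convexD_alt) auto
      finally show ?thesis .
    qed
    have cpsi: "continuous_on (\<phi> ` N) \<psi>" using hom by (simp add: homeomorphism_def)
    have img: "(\<lambda>z. c + \<kappa> z *\<^sub>R (\<phi> (p z) - c)) ` ?D1 \<subseteq> \<phi> ` N"
      using mem by blast
    have "continuous_on ?D1 (\<lambda>z. \<psi> (c + \<kappa> z *\<^sub>R (\<phi> (p z) - c)))"
      by (rule continuous_on_compose2[OF cpsi cc img])
    then show ?thesis by (rule continuous_on_eq) (auto simp: R_def)
  qed
  have c2: "continuous_on ?D2 (\<lambda>z. R (\<kappa> z) (p z))"
  proof (rule continuous_on_eq[of _ p])
    show "continuous_on ?D2 p" using cp by (rule continuous_on_subset) auto
    fix z assume z: "z \<in> ?D2"
    show "p z = R (\<kappa> z) (p z)"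
    proof (cases "p z \<in> N")
      case True
      then have "\<rho> (p z) = 1" using z nle[of "p z"] by (auto simp: \<rho>_def Op_def)
      then show ?thesis using k1 z R1 by auto
    qed (auto simp: R_def)
  qed
  show ?thesis using continuous_on_closed_Un[OF cl1 cl2 c1 c2] DU by simp
qed

end

locale bq =
  fixes K L :: "nat \<Rightarrow> 'a::euclidean_space set" and g :: "real \<Rightarrow> 'a" and t :: "nat \<Rightarrow> real"
    and \<theta> \<theta>' :: "nat \<Rightarrow> 'a \<Rightarrow> 'a" and \<phi> :: "nat \<Rightarrow> 'a \<Rightarrow> 'c::euclidean_space"
    and \<psi> :: "nat \<Rightarrow> 'c \<Rightarrow> 'a" and N :: "nat \<Rightarrow> 'a set"
  assumes K0: "\<And>j. 1 \<le> j \<Longrightarrow> 0 \<in> K j" and Kc: "\<And>j. 1 \<le> j \<Longrightarrow> compact (K j)"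
    and Kdisj: "\<And>i j. 1 \<le> i \<Longrightarrow> 1 \<le> j \<Longrightarrow> i \<noteq> j \<Longrightarrow> K i \<inter> K j = {0}"
    and Kdiam: "(\<lambda>j. diameter (K j)) \<longlonglongrightarrow> 0"
    and arc: "arc g" and t1: "t 1 = 0" and tinc: "\<And>i. 1 \<le> i \<Longrightarrow> t i < t (Suc i)"
    and tlim: "t \<longlonglongrightarrow> 1"
    and LA: "\<And>j. 1 \<le> j \<Longrightarrow> L j \<inter> path_image g = {g (t j)}"
    and Ldisj: "\<And>i j. 1 \<le> i \<Longrightarrow> 1 \<le> j \<Longrightarrow> i \<noteq> j \<Longrightarrow> L i \<inter> L j = {}"
    and Ldiam: "(\<lambda>j. diameter (L j)) \<longlonglongrightarrow> 0"
    and hom: "\<And>j. 1 \<le> j \<Longrightarrow> homeomorphism (K j) (L j) (\<theta> j) (\<theta>' j)"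
    and th0: "\<And>j. 1 \<le> j \<Longrightarrow> \<theta> j 0 = g (t j)"
    and ch: "\<And>j. 1 \<le> j \<Longrightarrow> has_chart (K j) 0 (\<phi> j) (\<psi> j) (N j)"
begin

definition "W = (\<Union>j\<in>{1..}. K j)"
definition "A = path_image g"
definition "V = A \<union> (\<Union>j\<in>{1..}. L j)"
definition "\<rho> j x = (if x \<in> N j then norm (\<phi> j x - \<phi> j 0) else 1)"
definition "R j k x = (if x \<in> N j then \<psi> j (\<phi> j 0 + k *\<^sub>R (\<phi> j x - \<phi> j 0)) else x)"
definition "idxK x = (SOME j. 1 \<le> j \<and> x \<in> K j)"
definition "idxL y = (SOME j. 1 \<le> j \<and> y \<in> L j)"
definition "u (r::real) = 2 - 1 / max r (1/2)"

lemma chart_facts: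
  assumes j: "1 \<le> j"
  shows "continuous_on (K j) (\<rho> j)" "\<And>x. 0 \<le> \<rho> j x" "\<And>x. \<rho> j x \<le> 1" "\<rho> j 0 = 0"
    "\<And>x. x \<in> K j \<Longrightarrow> \<rho> j x = 0 \<Longrightarrow> x = 0"
    "\<And>x k. x \<in> K j \<Longrightarrow> 0 \<le> k \<Longrightarrow> k \<le> 1 \<Longrightarrow> R j k x \<in> K j"
    "\<And>x. R j 1 x = x" "\<And>x. x \<in> K j \<Longrightarrow> \<rho> j x < 1 \<Longrightarrow> R j 0 x = 0" "\<And>k. R j k 0 = 0"
proof -
  interpret C: chartloc "K j" "\<phi> j" "\<psi> j" "N j" using Kc ch j by unfold_locales auto
  have r: "\<rho> j = C.\<rho>" "R j = C.R" by (auto simp: fun_eq_iff \<rho>_def C.\<rho>_def R_def C.R_def C.c_def)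
  show "continuous_on (K j) (\<rho> j)" "\<And>x. 0 \<le> \<rho> j x" "\<And>x. \<rho> j x \<le> 1" "\<rho> j 0 = 0"
    "\<And>x. x \<in> K j \<Longrightarrow> \<rho> j x = 0 \<Longrightarrow> x = 0"
    "\<And>x k. x \<in> K j \<Longrightarrow> 0 \<le> k \<Longrightarrow> k \<le> 1 \<Longrightarrow> R j k x \<in> K j"
    "\<And>x. R j 1 x = x" "\<And>k. R j k 0 = 0"
    unfolding r using C.rho_cont C.rho_range C.rho0 C.rho_eq0 C.R_in C.R1 C.R_at0 by auto
  show "\<And>x. x \<in> K j \<Longrightarrow> \<rho> j x < 1 \<Longrightarrow> R j 0 x = 0"
    unfolding r using C.R0 by (auto simp: C.\<rho>_def split: if_splits)
qed

lemma R_cont: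
  fixes D :: "'z::metric_space set" and p :: "'z \<Rightarrow> 'a" and \<kappa> :: "'z \<Rightarrow> real"
  assumes j: "1 \<le> j" and D: "closed D" and cp: "continuous_on D p" and pD: "p ` D \<subseteq> K j"
    and ck: "continuous_on {z\<in>D. p z \<in> N j \<and> p z \<noteq> 0} \<kappa>"
    and kr: "\<And>z. z \<in> D \<Longrightarrow> 0 \<le> \<kappa> z \<and> \<kappa> z \<le> 1"
    and k1: "\<And>z. z \<in> D \<Longrightarrow> \<rho> j (p z) = 1 \<Longrightarrow> \<kappa> z = 1"
  shows "continuous_on D (\<lambda>z. R j (\<kappa> z) (p z))"
proof -
  interpret C: chartloc "K j" "\<phi> j" "\<psi> j" "N j" using Kc ch j by unfold_locales auto
  have r: "\<rho> j = C.\<rho>" "R j = C.R" by (auto simp: fun_eq_iff \<rho>_def C.\<rho>_def R_def C.R_def C.c_def)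
  show ?thesis unfolding r by (rule C.R_cont[OF D cp pD ck kr k1[unfolded r]])
qed

lemma t_mono: assumes "1 \<le> j" "j \<le> i" shows "t j \<le> t i"
  using assms(2)
proof (induction i rule: dec_induct)
  case (step i) then show ?case using tinc[of i] assms(1) by simp
qed simp

lemma t_ge0: "1 \<le> j \<Longrightarrow> 0 \<le> t j" using t_mono[of 1 j] t1 by simp

lemma t_le1: "1 \<le> j \<Longrightarrow> t j \<le> 1"
  by (rule LIMSEQ_le_const[OF tlim]) (use t_mono in auto)

lemma path_g: "path g" using arc arc_imp_path by blast
lemma g_cont: "continuous_on {0..1} g" using path_g by (simp add: path_def)
lemma A_img: "A = g ` {0..1}" by (simp add: A_def path_image_def)
lemma A_compact: "compact A" unfolding A_def using path_g compact_path_image by blast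

lemma gt_in_A: "1 \<le> j \<Longrightarrow> t j \<le> s \<Longrightarrow> s \<le> 1 \<Longrightarrow> g s \<in> A"
  using t_ge0[of j] by (auto simp: A_img)

lemma idxK: assumes "1 \<le> j" "x \<in> K j" "x \<noteq> 0" shows "idxK x = j"
proof -
  have "1 \<le> idxK x \<and> x \<in> K (idxK x)" unfolding idxK_def by (rule someI[of _ j]) (use assms in auto)
  then show ?thesis using Kdisj[of j "idxK x"] assms by blast
qed

lemma idxL: assumes "1 \<le> j" "y \<in> L j" shows "idxL y = j"
proof -
  have "1 \<le> idxL y \<and> y \<in> L (idxL y)" unfolding idxL_def by (rule someI[of _ j]) (use assms in auto)
  then show ?thesis using Ldisj[of j "idxL y"] assms by blast
qed

lemma hK: "1 \<le> j \<Longrightarrow> continuous_on (K j) (\<theta> j)" "1 \<le> j \<Longrightarrow> \<theta> j ` K j = L j"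
  "1 \<le> j \<Longrightarrow> continuous_on (L j) (\<theta>' j)" "1 \<le> j \<Longrightarrow> \<theta>' j ` L j = K j"
  "1 \<le> j \<Longrightarrow> x \<in> K j \<Longrightarrow> \<theta>' j (\<theta> j x) = x" "1 \<le> j \<Longrightarrow> y \<in> L j \<Longrightarrow> \<theta> j (\<theta>' j y) = y"
  using hom unfolding homeomorphism_def by auto

lemma Lc: "1 \<le> j \<Longrightarrow> compact (L j)"
  using hK(1,2)[of j] Kc[of j] compact_continuous_image by metis

lemma th'p: "1 \<le> j \<Longrightarrow> \<theta>' j (g (t j)) = 0"
  using hK(5)[of j 0] K0 th0 by auto

lemma eps_bound:
  assumes e: "e > 0"
  shows "\<exists>m. \<forall>j\<ge>m. diameter (K j) < e \<and> diameter (L j) < e \<and> (\<forall>s\<in>{t j..1}. dist (g s) (g 1) < e)"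
proof -
  obtain d where d: "d > 0" "\<forall>s\<in>{0..1}. dist s 1 < d \<longrightarrow> dist (g s) (g 1) < e"
    using g_cont e unfolding continuous_on_iff by (metis atLeastAtMost_iff order_refl zero_le_one)
  obtain m1 where m1: "\<forall>j\<ge>m1. dist (t j) 1 < d" using tlim d unfolding LIMSEQ_def by blast
  obtain m2 where m2: "\<forall>j\<ge>m2. dist (diameter (K j)) 0 < e" using Kdiam e unfolding LIMSEQ_def by blast
  obtain m3 where m3: "\<forall>j\<ge>m3. dist (diameter (L j)) 0 < e" using Ldiam e unfolding LIMSEQ_def by blast
  show ?thesis
  proof (intro exI[of _ "max 1 (max m1 (max m2 m3))"] allI impI conjI ballI)
    fix j assume j: "max 1 (max m1 (max m2 m3)) \<le> j"
    show "diameter (K j) < e" using m2 j by auto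
    show "diameter (L j) < e" using m3 j by auto
    fix s assume s: "s \<in> {t j..1}"
    have "0 \<le> t j" "t j \<le> 1" using t_ge0 t_le1 j by auto
    moreover have "dist (t j) 1 < d" using m1 j by auto
    ultimately have "dist s 1 < d" using s by (auto simp: dist_real_def)
    then show "dist (g s) (g 1) < e" using d s \<open>0 \<le> t j\<close> by auto
  qed
qed

end

context bq begin

definition "G j x = (if \<rho> j x \<le> 1/2 then g (t j + (1 - 2 * \<rho> j x) * (1 - t j)) else \<theta> j (R j (u (\<rho> j x)) x))"
definition "gm x = (if x = 0 then g 1 else G (idxK x) x)"
definition "fm y = (if y \<in> A then 0 else \<theta>' (idxL y) y)"

lemma u_cont: "continuous_on UNIV u"
  unfolding u_def by (intro continuous_intros) auto

lemma u_range: "0 \<le> r \<Longrightarrow> r \<le> 1 \<Longrightarrow> 0 \<le> u r \<and> u r \<le> 1"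
  by (auto simp: u_def max_def field_simps)

lemma u_small: "r \<le> 1/2 \<Longrightarrow> u r = 0" by (simp add: u_def max_def)
lemma u_big: "1/2 \<le> r \<Longrightarrow> u r = 2 - 1 / r" by (simp add: u_def max_def)
lemma u_1: "u 1 = 1" by (simp add: u_def)

lemma near_p:
  assumes j: "1 \<le> j" and y: "y \<in> L j \<union> g ` {t j..1}" and dL: "diameter (L j) < e/2"
    and dg: "\<forall>s\<in>{t j..1}. dist (g s) (g 1) < e/2"
  shows "dist y (g 1) < e"
proof (cases "y \<in> L j")
  case True
  have p: "g (t j) \<in> L j" using LA[OF j] by auto
  have "dist y (g (t j)) \<le> diameter (L j)"
    using diameter_bounded_bound[OF compact_imp_bounded[OF Lc[OF j]] True p] .
  moreover have "dist (g (t j)) (g 1) < e/2" using dg t_le1[OF j] by auto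
  ultimately show ?thesis using dL dist_triangle[of y "g 1" "g (t j)"] by linarith
next
  case False
  then obtain s where s: "s \<in> {t j..1}" "y = g s" using y by auto
  then have "dist (g s) (g 1) < e/2" using dg by blast
  moreover have "0 \<le> dist (g s) (g 1)" by simp
  ultimately show ?thesis unfolding s(2) by linarith
qed

lemma G_cont: assumes j: "1 \<le> j" shows "continuous_on (K j) (G j)"
proof -
  note cf = chart_facts[OF j]
  let ?E1 = "{x\<in>K j. \<rho> j x \<le> 1/2}" and ?E2 = "{x\<in>K j. 1/2 \<le> \<rho> j x}"
  have cl1: "closed ?E1"
    by (rule continuous_on_closed_Collect_le[OF cf(1) continuous_on_const compact_imp_closed[OF Kc[OF j]]])
  have cl2: "closed ?E2"
    by (rule continuous_on_closed_Collect_le[OF continuous_on_const cf(1) compact_imp_closed[OF Kc[OF j]]])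
  have tj: "0 \<le> t j" "t j \<le> 1" using t_ge0 t_le1 j by auto
  have c1: "continuous_on ?E1 (\<lambda>x. g (t j + (1 - 2 * \<rho> j x) * (1 - t j)))"
  proof (rule continuous_on_compose2[OF g_cont])
    show "continuous_on ?E1 (\<lambda>x. t j + (1 - 2 * \<rho> j x) * (1 - t j))"
      by (intro continuous_intros continuous_on_subset[OF cf(1)]) auto
    have "t j + (1 - 2 * \<rho> j x) * (1 - t j) \<in> {0..1}" if "\<rho> j x \<le> 1/2" for x
    proof -
      have "0 \<le> (1 - 2 * \<rho> j x) * (1 - t j)" using that tj by simp
      moreover have "(1 - 2 * \<rho> j x) * (1 - t j) \<le> 1 - t j"
        using mult_nonneg_nonneg[of "\<rho> j x" "1 - t j"] cf(2)[of x] tj by (simp add: algebra_simps)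
      ultimately show ?thesis using tj by auto
    qed
    then show "(\<lambda>x. t j + (1 - 2 * \<rho> j x) * (1 - t j)) ` ?E1 \<subseteq> {0..1}" by blast
  qed
  have c2: "continuous_on ?E2 (\<lambda>x. \<theta> j (R j (u (\<rho> j x)) x))"
  proof (rule continuous_on_compose2[OF hK(1)[OF j]])
    show "continuous_on ?E2 (\<lambda>x. R j (u (\<rho> j x)) x)"
    proof (rule R_cont[of j ?E2 "\<lambda>x. x" "\<lambda>x. u (\<rho> j x)"])
      show "continuous_on {z \<in> ?E2. z \<in> N j \<and> z \<noteq> 0} (\<lambda>z. u (\<rho> j z))"
        by (rule continuous_on_compose2[OF u_cont continuous_on_subset[OF cf(1)]]) auto
      show "\<And>z. z \<in> ?E2 \<Longrightarrow> 0 \<le> u (\<rho> j z) \<and> u (\<rho> j z) \<le> 1"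
        using u_range cf(2,3) by blast
      show "\<And>z. z \<in> ?E2 \<Longrightarrow> \<rho> j z = 1 \<Longrightarrow> u (\<rho> j z) = 1"
        using u_1 by simp
    qed (use j cl2 in auto)
    show "(\<lambda>x. R j (u (\<rho> j x)) x) ` ?E2 \<subseteq> K j"
      using cf(6) u_range cf(2,3) by blast
  qed
  have e1: "continuous_on ?E1 (G j)" by (rule continuous_on_eq[OF c1]) (simp add: G_def)
  have e2: "continuous_on ?E2 (G j)"
  proof (rule continuous_on_eq[OF c2])
    fix x assume x: "x \<in> ?E2"
    show "\<theta> j (R j (u (\<rho> j x)) x) = G j x"
    proof (cases "\<rho> j x = 1/2")
      case True
      then have R0: "R j (u (\<rho> j x)) x = 0" using u_small cf(8) x by auto
      have e0: "1 - 2 * \<rho> j x = 0" using True by simp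
      have "G j x = g (t j + (1 - 2 * \<rho> j x) * (1 - t j))" using True by (simp add: G_def)
      also have "\<dots> = g (t j)" by (simp only: e0 mult_zero_left add_0_right)
      finally have "G j x = g (t j)" .
      then show ?thesis using R0 th0[OF j] by simp
    next
      case False then show ?thesis using x by (simp add: G_def)
    qed
  qed
  have "K j = ?E1 \<union> ?E2" by auto
  then show ?thesis using continuous_on_closed_Un[OF cl1 cl2 e1 e2] by simp
qed

lemma G_img: assumes j: "1 \<le> j" "x \<in> K j" shows "G j x \<in> L j \<union> g ` {t j..1}"
proof (cases "\<rho> j x \<le> 1/2")
  case True
  note cf = chart_facts[OF j(1)]
  have tj: "0 \<le> t j" "t j \<le> 1" using t_ge0 t_le1 j by auto
  have "0 \<le> (1 - 2 * \<rho> j x) * (1 - t j)" using True tj by simp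
  moreover have "(1 - 2 * \<rho> j x) * (1 - t j) \<le> 1 - t j"
    using mult_nonneg_nonneg[of "\<rho> j x" "1 - t j"] cf(2)[of x] tj by (simp add: algebra_simps)
  ultimately show ?thesis using True by (auto simp: G_def)
next
  case False
  note cf = chart_facts[OF j(1)]
  have "R j (u (\<rho> j x)) x \<in> K j" using cf(6)[OF j(2)] u_range cf(2,3) by blast
  then show ?thesis using False hK(2)[OF j(1)] by (auto simp: G_def)
qed

lemma gm_piece: assumes j: "1 \<le> j" "x \<in> K j" shows "gm x = G j x"
proof (cases "x = 0")
  case True
  have "\<rho> j 0 = 0" using chart_facts(4)[OF j(1)] .
  then show ?thesis using True by (simp add: gm_def G_def)
next
  case False then show ?thesis using idxK[OF j False] by (simp add: gm_def)
qed

lemma fm_piece: assumes j: "1 \<le> j" "y \<in> L j" shows "fm y = \<theta>' j y"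
proof (cases "y \<in> A")
  case True
  then have "y = g (t j)" using LA[OF j(1)] j(2) by (auto simp: A_def)
  then show ?thesis using True th'p[OF j(1)] by (simp add: fm_def)
next
  case False then show ?thesis using idxL[OF j] by (simp add: fm_def)
qed

lemma W_eq: "W = {0} \<union> (\<Union>j\<in>{1..}. K j)" using K0[of 1] by (auto simp: W_def)
lemma V_eq: "V = A \<union> (\<Union>j\<in>{1..}. L j)" by (simp add: V_def)

lemma gm_cont: "continuous_on W gm"
proof (rule continuous_on_pieces[OF W_eq])
  show "closed {0::'a}" by simp
  show "\<And>j. j \<in> {1..} \<Longrightarrow> closed (K j)" using Kc compact_imp_closed by auto
  show "continuous_on {0} gm" by simp
  show "\<And>j. j \<in> {1..} \<Longrightarrow> continuous_on (K j) gm"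
    using G_cont gm_piece by (auto intro: continuous_on_eq)
  fix e :: real assume e: "e > 0"
  obtain m where m: "\<forall>j\<ge>m. diameter (K j) < e/2 \<and> diameter (L j) < e/2 \<and> (\<forall>s\<in>{t j..1}. dist (g s) (g 1) < e/2)"
    using eps_bound[of "e/2"] e by auto
  show "\<exists>m. \<forall>j\<in>{1..}. m \<le> j \<longrightarrow> (\<forall>x\<in>K j. \<exists>z\<in>{0}. dist x z < e \<and> dist (gm x) (gm z) < e)"
  proof (intro exI[of _ m] ballI impI bexI[of _ 0] conjI)
    fix j x assume j: "j \<in> {1..}" "m \<le> j" and x: "x \<in> K j"
    have "dist x 0 \<le> diameter (K j)"
      using diameter_bounded_bound[OF compact_imp_bounded[OF Kc] x K0] j by auto
    then show "dist x 0 < e" using m j e by fastforce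
    have "dist (gm x) (g 1) < e"
      using near_p[of j "gm x" e] m j G_img[of j x] gm_piece[of j x] x by auto
    then show "dist (gm x) (gm 0) < e" by (simp add: gm_def)
  qed simp
qed simp

lemma fm_cont: "continuous_on V fm"
proof (rule continuous_on_pieces[OF V_eq])
  show "closed A" using A_compact compact_imp_closed by blast
  show "\<And>j. j \<in> {1..} \<Longrightarrow> closed (L j)" using Lc compact_imp_closed by auto
  show "continuous_on A fm" by (rule continuous_on_eq[OF continuous_on_const]) (simp add: fm_def)
  show "\<And>j. j \<in> {1..} \<Longrightarrow> continuous_on (L j) fm"
    using hK(3) fm_piece by (auto intro: continuous_on_eq)
  fix e :: real assume e: "e > 0"
  obtain m where m: "\<forall>j\<ge>m. diameter (K j) < e \<and> diameter (L j) < e \<and> (\<forall>s\<in>{t j..1}. dist (g s) (g 1) < e)"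
    using eps_bound[of "e"] e by auto
  show "\<exists>m. \<forall>j\<in>{1..}. m \<le> j \<longrightarrow> (\<forall>x\<in>L j. \<exists>z\<in>A. dist x z < e \<and> dist (fm x) (fm z) < e)"
  proof (intro exI[of _ m] ballI impI)
    fix j y assume j: "j \<in> {1..}" "m \<le> j" and y: "y \<in> L j"
    have p: "g (t j) \<in> L j" "g (t j) \<in> A" using LA[of j] j by (auto simp: A_def)
    have "dist y (g (t j)) \<le> diameter (L j)"
      using diameter_bounded_bound[OF compact_imp_bounded[OF Lc] y p(1)] j by auto
    moreover have "fm y \<in> K j" using fm_piece[of j y] hK(4)[of j] j y by auto
    then have "dist (fm y) 0 \<le> diameter (K j)"
      using diameter_bounded_bound[OF compact_imp_bounded[OF Kc] _ K0] j by auto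
    ultimately show "\<exists>z\<in>A. dist y z < e \<and> dist (fm y) (fm z) < e"
      using m j p(2) by (intro bexI[of _ "g (t j)"]) (auto simp: fm_def)
  qed
qed simp

end

context bq begin

definition "H1 z = (case z of (s, x) \<Rightarrow> if x = 0 then 0 else R (idxK x) ((1 - s) * u (\<rho> (idxK x) x) + s) x)"

lemma H1_piece: assumes j: "1 \<le> j" "x \<in> K j" shows "H1 (s, x) = R j ((1 - s) * u (\<rho> j x) + s) x"
proof (cases "x = 0")
  case True then show ?thesis using chart_facts(9)[OF j(1)] by (simp add: H1_def)
next
  case False then show ?thesis using idxK[OF j False] by (simp add: H1_def)
qed

lemma kappa1_range: assumes "0 \<le> s" "s \<le> 1" "0 \<le> r" "r \<le> 1"
  shows "0 \<le> (1 - s) * u r + s \<and> (1 - s) * u r + s \<le> 1"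
proof -
  have "0 \<le> u r" "u r \<le> 1" using u_range assms by auto
  moreover have "(1 - s) * u r \<le> (1 - s)" using assms \<open>u r \<le> 1\<close> \<open>0 \<le> u r\<close> by (simp add: mult_right_le_one_le)
  ultimately show ?thesis using assms by simp
qed

lemma H1_piece_cont: assumes j: "1 \<le> j"
  shows "continuous_on ({0..1} \<times> K j) (\<lambda>z. R j ((1 - fst z) * u (\<rho> j (snd z)) + fst z) (snd z))"
proof -
  note cf = chart_facts[OF j]
  have cl: "closed ({0..1::real} \<times> K j)" using Kc[OF j] by (simp add: closed_Times compact_imp_closed)
  have cr: "continuous_on ({0..1::real} \<times> K j) (\<lambda>z. \<rho> j (snd z))"
    by (rule continuous_on_compose2[OF cf(1) continuous_on_snd]) auto
  show ?thesis
  proof (rule R_cont[of j "{0..1} \<times> K j" snd "\<lambda>z. (1 - fst z) * u (\<rho> j (snd z)) + fst z"])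
    have "continuous_on ({0..1::real} \<times> K j) (\<lambda>z. (1 - fst z) * u (\<rho> j (snd z)) + fst z)"
      by (intro continuous_intros continuous_on_compose2[OF u_cont cr]) auto
    then show "continuous_on {z \<in> {0..1} \<times> K j. snd z \<in> N j \<and> snd z \<noteq> 0} (\<lambda>z. (1 - fst z) * u (\<rho> j (snd z)) + fst z)"
      by (rule continuous_on_subset) auto
    show "\<And>z. z \<in> {0..1} \<times> K j \<Longrightarrow> 0 \<le> (1 - fst z) * u (\<rho> j (snd z)) + fst z \<and> (1 - fst z) * u (\<rho> j (snd z)) + fst z \<le> 1"
      using kappa1_range cf(2,3) by auto
    show "\<And>z. z \<in> {0..1} \<times> K j \<Longrightarrow> \<rho> j (snd z) = 1 \<Longrightarrow> (1 - fst z) * u (\<rho> j (snd z)) + fst z = 1"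
      using u_1 by simp
  qed (use cl j in \<open>auto intro: continuous_on_snd\<close>)
qed

lemma H1_in: assumes j: "1 \<le> j" "x \<in> K j" "s \<in> {0..1}" shows "H1 (s, x) \<in> K j"
  using H1_piece[OF j(1,2)] chart_facts(6)[OF j(1) j(2)] kappa1_range[of s "\<rho> j x"] chart_facts(2,3)[OF j(1)] j(3)
  by auto

lemma H1_cont: "continuous_on ({0..1} \<times> W) H1"
proof (rule continuous_on_pieces[where Z="{0..1} \<times> {0}" and P="\<lambda>j. {0..1} \<times> K j" and I="{1..}"])
  show "{0..1} \<times> W = {0..1} \<times> {0} \<union> (\<Union>j\<in>{1..}. {0..1} \<times> K j)" using W_eq by auto
  show "closed ({0..1::real} \<times> {0::'a})" by (simp add: closed_Times)
  show "\<And>j. j \<in> {1..} \<Longrightarrow> closed ({0..1::real} \<times> K j)" using Kc by (simp add: closed_Times compact_imp_closed)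
  show "continuous_on ({0..1} \<times> {0}) H1" by (rule continuous_on_eq[OF continuous_on_const]) (auto simp: H1_def)
  show "continuous_on ({0..1} \<times> K j) H1" if "j \<in> {1..}" for j
  proof -
    have j: "1 \<le> j" using that by simp
    show ?thesis by (rule continuous_on_eq[OF H1_piece_cont[OF j]]) (clarsimp simp: H1_piece[OF j])
  qed
  fix e :: real assume e: "e > 0"
  obtain m where m: "\<forall>j\<ge>m. diameter (K j) < e \<and> diameter (L j) < e \<and> (\<forall>s\<in>{t j..1}. dist (g s) (g 1) < e)"
    using eps_bound[of e] e by auto
  show "\<exists>m. \<forall>j\<in>{1..}. m \<le> j \<longrightarrow> (\<forall>x\<in>{0..1} \<times> K j. \<exists>z\<in>{0..1} \<times> {0}. dist x z < e \<and> dist (H1 x) (H1 z) < e)"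
  proof (intro exI[of _ m] ballI impI)
    fix j and z :: "real \<times> 'a" assume j: "j \<in> {1..}" "m \<le> j" and z: "z \<in> {0..1} \<times> K j"
    obtain s x where sx: "z = (s, x)" "s \<in> {0..1}" "x \<in> K j" using z by auto
    have d: "dist x 0 \<le> diameter (K j)"
      using diameter_bounded_bound[OF compact_imp_bounded[OF Kc] sx(3) K0] j by auto
    have "H1 (s, x) \<in> K j" using H1_in sx j by auto
    then have d2: "dist (H1 (s, x)) 0 \<le> diameter (K j)"
      using diameter_bounded_bound[OF compact_imp_bounded[OF Kc] _ K0] j by auto
    have "H1 (s, 0) = 0" by (simp add: H1_def)
    then show "\<exists>z'\<in>{0..1} \<times> {0}. dist z z' < e \<and> dist (H1 z) (H1 z') < e"
      using d d2 m j sx by (intro bexI[of _ "(s, 0)"]) (auto simp: dist_Pair_Pair)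
  qed
qed auto

end

context bq begin

definition "T2 j s x = (if \<rho> j x \<le> (1 - s) / 2 then g (t j + 2 * ((1 - s) / 2 - \<rho> j x) * (1 - t j))
   else \<theta> j (R j ((\<rho> j x - (1 - s) / 2) / ((1 - (1 - s) / 2) * \<rho> j x)) x))"
definition "ginv = inv_into {0..1} g"
definition "H2 z = (case z of (s, y) \<Rightarrow> if y \<in> A then g (1 - s * (1 - ginv y)) else T2 (idxL y) s (\<theta>' (idxL y) y))"

lemma ginv_hom: "homeomorphism {0..1} A g ginv"
proof -
  obtain h where h: "homeomorphism {0..1} (path_image g) g h" using homeomorphism_arc[OF arc] by blast
  have inj: "inj_on g {0..1}" using arc by (simp add: arc_def)
  show ?thesis
  proof (rule homeomorphism_cong[OF h])
    fix y assume y: "y \<in> path_image g"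
    have "h y \<in> {0..1}" "g (h y) = y" using h y by (auto simp: homeomorphism_def)
    then show "ginv y = h y" unfolding ginv_def by (metis inj inv_into_f_f)
  qed (auto simp: A_def)
qed

lemma ginv_g: "s \<in> {0..1} \<Longrightarrow> ginv (g s) = s"
  unfolding ginv_def using arc by (simp add: arc_def inv_into_f_f)

lemma param_range: fixes s r :: real assumes "1 \<le> j" "0 \<le> s" "s \<le> 1" "0 \<le> r" "r \<le> (1 - s) / 2"
  shows "t j \<le> t j + 2 * ((1 - s) / 2 - r) * (1 - t j) \<and> t j + 2 * ((1 - s) / 2 - r) * (1 - t j) \<le> 1"
proof -
  have tj: "0 \<le> t j" "t j \<le> 1" using t_ge0 t_le1 assms by auto
  have a: "0 \<le> 2 * ((1 - s) / 2 - r)" "2 * ((1 - s) / 2 - r) \<le> 1" using assms by (auto simp: field_simps)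
  then have "0 \<le> 2 * ((1 - s) / 2 - r) * (1 - t j)" using tj by simp
  moreover have "2 * ((1 - s) / 2 - r) * (1 - t j) \<le> 1 - t j"
    using a tj by (simp add: mult_left_le_one_le)
  ultimately show ?thesis by simp
qed

lemma kappa2_range: fixes s r :: real assumes "0 \<le> s" "s \<le> 1" "0 \<le> r" "r \<le> 1" "(1 - s) / 2 \<le> r"
  shows "0 \<le> (r - (1 - s) / 2) / ((1 - (1 - s) / 2) * r) \<and> (r - (1 - s) / 2) / ((1 - (1 - s) / 2) * r) \<le> 1"
proof (cases "r = 0")
  case False
  then have r: "r > 0" using assms by simp
  have p: "(1 - (1 - s) / 2) * r > 0" using r assms by simp
  have "r - (1 - s) / 2 \<le> (1 - (1 - s) / 2) * r"
  proof -
    have "(1 - s) / 2 * r \<le> (1 - s) / 2" using assms mult_right_le_one_le[of "(1-s)/2" r] by simp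
    then show ?thesis by (simp add: algebra_simps)
  qed
  then show ?thesis using p assms by (simp add: divide_le_eq_1)
qed simp

lemma T2_cont: assumes j: "1 \<le> j"
  shows "continuous_on ({0..1} \<times> L j) (\<lambda>z. T2 j (fst z) (\<theta>' j (snd z)))"
proof -
  note cf = chart_facts[OF j]
  let ?D = "{0..1::real} \<times> L j"
  let ?q = "\<lambda>z. \<theta>' j (snd z)" and ?r = "\<lambda>z::real\<times>'a. \<rho> j (\<theta>' j (snd z))" and ?\<tau> = "\<lambda>z::real\<times>'a. (1 - fst z) / 2"
  let ?E1 = "{z\<in>?D. ?r z \<le> ?\<tau> z}" and ?E2 = "{z\<in>?D. ?\<tau> z \<le> ?r z}"
  have clD: "closed ?D" using Lc[OF j] by (simp add: closed_Times compact_imp_closed)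
  have qD: "?q ` ?D \<subseteq> K j" using hK(4)[OF j] by auto
  have cq: "continuous_on ?D ?q"
    by (rule continuous_on_compose2[OF hK(3)[OF j] continuous_on_snd]) auto
  have cr: "continuous_on ?D ?r"
    by (rule continuous_on_compose2[OF cf(1) cq qD])
  have ct: "continuous_on ?D ?\<tau>" by (intro continuous_intros) auto
  have cl1: "closed ?E1" by (rule continuous_on_closed_Collect_le[OF cr ct clD])
  have cl2: "closed ?E2" by (rule continuous_on_closed_Collect_le[OF ct cr clD])
  have c1: "continuous_on ?E1 (\<lambda>z. g (t j + 2 * (?\<tau> z - ?r z) * (1 - t j)))"
  proof (rule continuous_on_compose2[OF g_cont])
    show "continuous_on ?E1 (\<lambda>z. t j + 2 * (?\<tau> z - ?r z) * (1 - t j))"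
      by (intro continuous_intros continuous_on_subset[OF cr]) auto
    show "(\<lambda>z. t j + 2 * (?\<tau> z - ?r z) * (1 - t j)) ` ?E1 \<subseteq> {0..1}"
      using param_range[OF j] cf(2) t_ge0[OF j] by (force simp: image_subset_iff)
  qed
  let ?k = "\<lambda>z. (?r z - ?\<tau> z) / ((1 - ?\<tau> z) * ?r z)"
  have c2: "continuous_on ?E2 (\<lambda>z. \<theta> j (R j (?k z) (?q z)))"
  proof (rule continuous_on_compose2[OF hK(1)[OF j]])
    show "continuous_on ?E2 (\<lambda>z. R j (?k z) (?q z))"
    proof (rule R_cont[of j ?E2 ?q ?k])
      show "continuous_on ?E2 ?q" by (rule continuous_on_subset[OF cq]) auto
      show "?q ` ?E2 \<subseteq> K j" using qD by auto
      have nz: "(1 - ?\<tau> z) * ?r z \<noteq> 0" if z: "z \<in> {z\<in>?E2. ?q z \<in> N j \<and> ?q z \<noteq> 0}" for z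
      proof -
        have "?q z \<in> K j" using z qD by auto
        then have "?r z \<noteq> 0" using cf(5) z by blast
        moreover have "?\<tau> z \<noteq> 1" using z by auto
        ultimately show "(1 - ?\<tau> z) * ?r z \<noteq> 0" by simp
      qed
      have crr: "continuous_on {z\<in>?E2. ?q z \<in> N j \<and> ?q z \<noteq> 0} ?r"
        by (rule continuous_on_subset[OF cr]) auto
      have "continuous_on {z\<in>?E2. ?q z \<in> N j \<and> ?q z \<noteq> 0} ?k"
        by (rule continuous_on_divide) (use nz crr in \<open>auto intro!: continuous_intros\<close>)
      then show "continuous_on {z\<in>?E2. ?q z \<in> N j \<and> ?q z \<noteq> 0} ?k" .
      show "\<And>z. z \<in> ?E2 \<Longrightarrow> 0 \<le> ?k z \<and> ?k z \<le> 1"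
        using kappa2_range cf(2,3) by auto
      show "\<And>z. z \<in> ?E2 \<Longrightarrow> ?r z = 1 \<Longrightarrow> ?k z = 1"
        by auto
    qed (use cl2 j in auto)
    show "(\<lambda>z. R j (?k z) (?q z)) ` ?E2 \<subseteq> K j"
      using cf(6) qD kappa2_range cf(2,3) by (force simp: image_subset_iff)
  qed
  have e1: "continuous_on ?E1 (\<lambda>z. T2 j (fst z) (\<theta>' j (snd z)))"
    by (rule continuous_on_eq[OF c1]) (auto simp: T2_def)
  have e2: "continuous_on ?E2 (\<lambda>z. T2 j (fst z) (\<theta>' j (snd z)))"
  proof (rule continuous_on_eq[OF c2])
    fix z assume z: "z \<in> ?E2"
    show "\<theta> j (R j (?k z) (?q z)) = T2 j (fst z) (\<theta>' j (snd z))"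
    proof (cases "?r z = ?\<tau> z")
      case True
      have qK: "?q z \<in> K j" using z qD by auto
      have "?r z < 1" using True z by auto
      have k0: "?k z = 0" using True by simp
      have "R j (?k z) (?q z) = R j 0 (?q z)" by (simp only: k0)
      also have "\<dots> = 0" using \<open>?r z < 1\<close> cf(8)[OF qK] by simp
      finally have R0: "R j (?k z) (?q z) = 0" .
      have e0: "2 * (?\<tau> z - ?r z) = 0" using True by simp
      have "T2 j (fst z) (\<theta>' j (snd z)) = g (t j + 2 * (?\<tau> z - ?r z) * (1 - t j))"
        using True by (simp add: T2_def)
      also have "\<dots> = g (t j)" by (simp only: e0 mult_zero_left add_0_right)
      finally show ?thesis using R0 th0[OF j] by simp
    next
      case False then show ?thesis using z by (simp add: T2_def)
    qed
  qed
  have "?D = ?E1 \<union> ?E2" by auto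
  then show ?thesis using continuous_on_closed_Un[OF cl1 cl2 e1 e2] by simp
qed

end

context bq begin

lemma T2_img: assumes j: "1 \<le> j" "x \<in> K j" "0 \<le> s" "s \<le> 1"
  shows "T2 j s x \<in> L j \<union> g ` {t j..1}"
proof (cases "\<rho> j x \<le> (1 - s) / 2")
  case True
  then show ?thesis using param_range[OF j(1) j(3,4) chart_facts(2)[OF j(1)] True] by (auto simp: T2_def)
next
  case False
  note cf = chart_facts[OF j(1)]
  have "R j ((\<rho> j x - (1 - s) / 2) / ((1 - (1 - s) / 2) * \<rho> j x)) x \<in> K j"
    using cf(6)[OF j(2)] kappa2_range[of s "\<rho> j x"] j cf(2,3) False by auto
  then show ?thesis using False hK(2)[OF j(1)] by (auto simp: T2_def)
qed

lemma T2_0: assumes j: "1 \<le> j" "x \<in> K j" shows "T2 j 0 x = G j x"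
proof (cases "\<rho> j x \<le> 1/2")
  case True
  have "2 * ((1 - 0) / 2 - \<rho> j x) = 1 - 2 * \<rho> j x" by simp
  then show ?thesis using True by (simp add: T2_def G_def)
next
  case False
  then have "(\<rho> j x - (1 - 0) / 2) / ((1 - (1 - 0) / 2) * \<rho> j x) = u (\<rho> j x)"
    using u_big[of "\<rho> j x"] by (simp add: field_simps)
  then show ?thesis using False by (simp add: T2_def G_def)
qed

lemma T2_1: assumes j: "1 \<le> j" "x \<in> K j" shows "T2 j 1 x = \<theta> j x"
proof (cases "\<rho> j x \<le> 0")
  case True
  then have "\<rho> j x = 0" using chart_facts(2)[OF j(1), of x] by simp
  then have "x = 0" using chart_facts(5)[OF j(1) j(2)] by simp
  then show ?thesis using th0[OF j(1)] chart_facts(4)[OF j(1)] by (simp add: T2_def)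
next
  case False
  then have "(\<rho> j x - (1 - 1) / 2) / ((1 - (1 - 1) / 2) * \<rho> j x) = 1" by simp
  then show ?thesis using False chart_facts(7)[OF j(1)] by (simp add: T2_def)
qed

lemma H2_piece: assumes j: "1 \<le> j" "y \<in> L j" "s \<in> {0..1}" shows "H2 (s, y) = T2 j s (\<theta>' j y)"
proof (cases "y \<in> A")
  case True
  then have y: "y = g (t j)" using LA[OF j(1)] j(2) by (auto simp: A_def)
  have tj: "t j \<in> {0..1}" using t_ge0 t_le1 j by auto
  have "0 \<le> (1 - s) / 2" using j by auto
  then have "T2 j s (\<theta>' j y) = g (t j + 2 * ((1 - s) / 2 - 0) * (1 - t j))"
    using y th'p[OF j(1)] chart_facts(4)[OF j(1)] by (simp add: T2_def)
  also have "t j + 2 * ((1 - s) / 2 - 0) * (1 - t j) = 1 - s * (1 - t j)" by (simp add: field_simps)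
  then have "g (t j + 2 * ((1 - s) / 2 - 0) * (1 - t j)) = g (1 - s * (1 - t j))" by simp
  finally show ?thesis using True y ginv_g[OF tj] by (simp add: H2_def)
next
  case False then show ?thesis using idxL[OF j(1,2)] by (simp add: H2_def)
qed

lemma H2_A: "y \<in> A \<Longrightarrow> H2 (s, y) = g (1 - s * (1 - ginv y))" by (simp add: H2_def)

lemma ginv_A: "y \<in> A \<Longrightarrow> ginv y \<in> {0..1} \<and> g (ginv y) = y"
  using ginv_hom by (auto simp: homeomorphism_def)

lemma par01: "s \<in> {0..1} \<Longrightarrow> y \<in> A \<Longrightarrow> 1 - s * (1 - ginv y) \<in> {0..1::real}"
proof -
  assume s: "s \<in> {0..1}" and y: "y \<in> A"
  have a: "0 \<le> ginv y" "ginv y \<le> 1" using ginv_A[OF y] by auto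
  have "s * (1 - ginv y) \<le> 1" using s a mult_le_one[of s "1 - ginv y"] by auto
  moreover have "0 \<le> s * (1 - ginv y)" using s a by auto
  ultimately show ?thesis by auto
qed

lemma H2_cont: "continuous_on ({0..1} \<times> V) H2"
proof (rule continuous_on_pieces[where Z="{0..1} \<times> A" and P="\<lambda>j. {0..1} \<times> L j" and I="{1..}"])
  show "{0..1} \<times> V = {0..1} \<times> A \<union> (\<Union>j\<in>{1..}. {0..1} \<times> L j)" using V_eq by auto
  show "closed ({0..1::real} \<times> A)" using A_compact by (simp add: closed_Times compact_imp_closed)
  show "\<And>j. j \<in> {1..} \<Longrightarrow> closed ({0..1::real} \<times> L j)" using Lc by (simp add: closed_Times compact_imp_closed)
  have "continuous_on ({0..1} \<times> A) (\<lambda>z. g (1 - fst z * (1 - ginv (snd z))))"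
  proof (rule continuous_on_compose2[OF g_cont])
    have cg: "continuous_on A ginv" using ginv_hom by (simp add: homeomorphism_def)
    have "continuous_on ({0..1::real} \<times> A) (\<lambda>z. ginv (snd z))"
      by (rule continuous_on_compose2[OF cg continuous_on_snd]) auto
    then show "continuous_on ({0..1} \<times> A) (\<lambda>z. 1 - fst z * (1 - ginv (snd z)))"
      by (intro continuous_intros)
    show "(\<lambda>z. 1 - fst z * (1 - ginv (snd z))) ` ({0..1} \<times> A) \<subseteq> {0..1}"
      using par01 by auto
  qed
  then show "continuous_on ({0..1} \<times> A) H2" by (rule continuous_on_eq) (auto simp: H2_A)
  show "continuous_on ({0..1} \<times> L j) H2" if "j \<in> {1..}" for j
  proof -
    have j: "1 \<le> j" using that by simp
    show ?thesis by (rule continuous_on_eq[OF T2_cont[OF j]]) (clarsimp simp: H2_piece[OF j])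
  qed
  fix e :: real assume e: "e > 0"
  obtain m where m: "\<forall>j\<ge>m. diameter (K j) < e/4 \<and> diameter (L j) < e/4 \<and> (\<forall>s\<in>{t j..1}. dist (g s) (g 1) < e/4)"
    using eps_bound[of "e/4"] e by auto
  show "\<exists>m. \<forall>j\<in>{1..}. m \<le> j \<longrightarrow> (\<forall>x\<in>{0..1} \<times> L j. \<exists>z\<in>{0..1} \<times> A. dist x z < e \<and> dist (H2 x) (H2 z) < e)"
  proof (intro exI[of _ m] ballI impI)
    fix j and z :: "real \<times> 'a" assume j: "j \<in> {1..}" "m \<le> j" and z: "z \<in> {0..1} \<times> L j"
    obtain s y where sy: "z = (s, y)" "s \<in> {0..1}" "y \<in> L j" using z by auto
    have j1: "1 \<le> j" using j by simp
    have p: "g (t j) \<in> L j" "g (t j) \<in> A" using LA[OF j1] by (auto simp: A_def)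
    have d: "dist y (g (t j)) \<le> diameter (L j)"
      using diameter_bounded_bound[OF compact_imp_bounded[OF Lc[OF j1]] sy(3) p(1)] .
    have "H2 (s, y) \<in> L j \<union> g ` {t j..1}"
      using H2_piece[OF j1 sy(3,2)] T2_img[OF j1 _, of "\<theta>' j y" s] hK(4)[OF j1] sy by auto
    then have d1: "dist (H2 (s, y)) (g 1) < e/2"
      using near_p[OF j1, of "H2 (s, y)" "e/2"] m j by auto
    have tj: "t j \<in> {0..1}" using t_ge0 t_le1 j1 by auto
    have "H2 (s, g (t j)) = g (1 - s * (1 - t j))" using H2_A[OF p(2)] ginv_g[OF tj] by simp
    moreover have "1 - s * (1 - t j) \<in> {t j..1}"
    proof -
      have "s * (1 - t j) \<le> 1 - t j" using sy(2) tj by (simp add: mult_left_le_one_le)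
      moreover have "0 \<le> s * (1 - t j)" using sy(2) tj by simp
      ultimately show ?thesis by auto
    qed
    ultimately have "H2 (s, g (t j)) \<in> L j \<union> g ` {t j..1}" by auto
    then have d2: "dist (H2 (s, g (t j))) (g 1) < e/2"
      using near_p[OF j1, of "H2 (s, g (t j))" "e/2"] m j by auto
    show "\<exists>z'\<in>{0..1} \<times> A. dist z z' < e \<and> dist (H2 z) (H2 z') < e"
    proof (intro bexI[of _ "(s, g (t j))"] conjI)
      show "dist z (s, g (t j)) < e" using d m j e sy by (auto simp: dist_Pair_Pair)
      show "dist (H2 z) (H2 (s, g (t j))) < e"
        using d1 d2 dist_triangle[of "H2 (s, y)" "H2 (s, g (t j))" "g 1"] sy
        by (simp add: dist_commute)
    qed (use sy p in auto)
  qed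
qed auto

end

context bq begin

lemma W_cases: "x \<in> W \<Longrightarrow> \<exists>j\<ge>1. x \<in> K j" by (auto simp: W_def)
lemma V_cases: "y \<in> V \<Longrightarrow> y \<in> A \<or> (\<exists>j\<ge>1. y \<in> L j)" by (auto simp: V_def)

lemma gm_img: "gm ` W \<subseteq> V"
proof
  fix z assume "z \<in> gm ` W"
  then obtain x j where x: "z = gm x" "1 \<le> j" "x \<in> K j" using W_cases by blast
  then have "z \<in> L j \<union> g ` {t j..1}" using G_img gm_piece by auto
  then show "z \<in> V" using x gt_in_A[of j] by (auto simp: V_def)
qed

lemma fm_img: "fm ` V \<subseteq> W"
proof
  fix z assume "z \<in> fm ` V"
  then obtain y where y: "z = fm y" "y \<in> V" by blast
  show "z \<in> W"
  proof (cases "y \<in> A")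
    case True then show ?thesis using y K0[of 1] by (auto simp: fm_def W_def)
  next
    case False
    then obtain j where j: "1 \<le> j" "y \<in> L j" using y V_cases by blast
    then have "z \<in> K j" using y fm_piece[OF j] hK(4)[OF j(1)] by auto
    then show ?thesis using j by (auto simp: W_def)
  qed
qed

lemma H1_img: "H1 ` ({0..1} \<times> W) \<subseteq> W"
  using H1_in W_cases by (force simp: W_def)

lemma H2_img: "H2 ` ({0..1} \<times> V) \<subseteq> V"
proof clarify
  fix s y assume s: "s \<in> {0..1::real}" and y: "y \<in> V"
  show "H2 (s, y) \<in> V"
  proof (cases "y \<in> A")
    case True then show ?thesis using H2_A par01[OF s True] by (auto simp: V_def A_img)
  next
    case False
    then obtain j where j: "1 \<le> j" "y \<in> L j" using y V_cases by blast
    have "H2 (s, y) \<in> L j \<union> g ` {t j..1}"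
      using H2_piece[OF j s] T2_img[OF j(1), of "\<theta>' j y" s] hK(4)[OF j(1)] j s by auto
    then show ?thesis using j gt_in_A[of j] by (auto simp: V_def)
  qed
qed

lemma H1_0: "x \<in> W \<Longrightarrow> H1 (0, x) = fm (gm x)"
proof -
  assume "x \<in> W"
  then obtain j where j: "1 \<le> j" "x \<in> K j" using W_cases by blast
  note cf = chart_facts[OF j(1)]
  have h: "H1 (0, x) = R j (u (\<rho> j x)) x" using H1_piece[OF j] by simp
  show ?thesis
  proof (cases "\<rho> j x \<le> 1/2")
    case True
    have tj: "0 \<le> t j" "t j \<le> 1" using t_ge0 t_le1 j by auto
    have "0 \<le> (1 - 2 * \<rho> j x) * (1 - t j)" using True tj by simp
    moreover have "(1 - 2 * \<rho> j x) * (1 - t j) \<le> 1 - t j"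
      using mult_nonneg_nonneg[of "\<rho> j x" "1 - t j"] cf(2)[of x] tj by (simp add: algebra_simps)
    ultimately have "G j x \<in> A" using True tj by (auto simp: G_def A_img)
    then have "fm (gm x) = 0" using gm_piece[OF j] by (simp add: fm_def)
    moreover have "R j (u (\<rho> j x)) x = 0" using u_small[OF True] cf(8)[OF j(2)] True by simp
    ultimately show ?thesis using h by simp
  next
    case False
    have RK: "R j (u (\<rho> j x)) x \<in> K j" using cf(6)[OF j(2)] u_range cf(2,3) by blast
    have "gm x = \<theta> j (R j (u (\<rho> j x)) x)" using gm_piece[OF j] False by (simp add: G_def)
    moreover have "\<theta> j (R j (u (\<rho> j x)) x) \<in> L j" using RK hK(2)[OF j(1)] by auto
    ultimately have "fm (gm x) = R j (u (\<rho> j x)) x"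
      using fm_piece[OF j(1)] hK(5)[OF j(1) RK] by simp
    then show ?thesis using h by simp
  qed
qed

lemma H1_1: "x \<in> W \<Longrightarrow> H1 (1, x) = x"
proof -
  assume "x \<in> W"
  then obtain j where j: "1 \<le> j" "x \<in> K j" using W_cases by blast
  then show ?thesis using H1_piece[OF j, of 1] chart_facts(7)[OF j(1)] by simp
qed

lemma H2_0: "y \<in> V \<Longrightarrow> H2 (0, y) = gm (fm y)"
proof -
  assume y: "y \<in> V"
  show ?thesis
  proof (cases "y \<in> A")
    case True then show ?thesis by (simp add: H2_A fm_def gm_def)
  next
    case False
    then obtain j where j: "1 \<le> j" "y \<in> L j" using y V_cases by blast
    have xK: "\<theta>' j y \<in> K j" using hK(4)[OF j(1)] j by auto
    have "H2 (0, y) = T2 j 0 (\<theta>' j y)" using H2_piece[OF j] by simp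
    also have "\<dots> = G j (\<theta>' j y)" using T2_0[OF j(1) xK] .
    also have "\<dots> = gm (fm y)" using gm_piece[OF j(1) xK] fm_piece[OF j] by simp
    finally show ?thesis .
  qed
qed

lemma H2_1: "y \<in> V \<Longrightarrow> H2 (1, y) = y"
proof -
  assume y: "y \<in> V"
  show ?thesis
  proof (cases "y \<in> A")
    case True then show ?thesis using ginv_A[OF True] by (simp add: H2_A)
  next
    case False
    then obtain j where j: "1 \<le> j" "y \<in> L j" using y V_cases by blast
    have xK: "\<theta>' j y \<in> K j" using hK(4)[OF j(1)] j by auto
    have "H2 (1, y) = T2 j 1 (\<theta>' j y)" using H2_piece[OF j] by simp
    also have "\<dots> = y" using T2_1[OF j(1) xK] hK(6)[OF j] by simp
    finally show ?thesis .
  qed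
qed

theorem W_heqv_V: "W homotopy_eqv V"
  unfolding homotopy_equivalent_space_def
proof (intro exI conjI)
  show "continuous_map (top_of_set W) (top_of_set V) gm"
    using gm_cont gm_img by (simp add: image_subset_iff Pi_iff)
  show "continuous_map (top_of_set V) (top_of_set W) fm"
    using fm_cont fm_img by (simp add: image_subset_iff Pi_iff)
  show "homotopic_with (\<lambda>x. True) (top_of_set W) (top_of_set W) (fm \<circ> gm) id"
    by (rule homotopic_canonI[OF H1_cont H1_img]) (auto simp: H1_0 H1_1)
  show "homotopic_with (\<lambda>x. True) (top_of_set V) (top_of_set V) (gm \<circ> fm) id"
    by (rule homotopic_canonI[OF H2_cont H2_img]) (auto simp: H2_0 H2_1)
qed

end

definition reflw :: "'b::real_inner \<Rightarrow> 'b \<Rightarrow> 'b" where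
  "reflw w x = x - ((2 / inner w w) * inner x w) *\<^sub>R w"

lemma refl_norm: assumes "w \<noteq> 0" shows "norm (reflw w x) = norm x"
proof -
  have ww: "inner w w \<noteq> 0" using assms by simp
  have "inner (reflw w x) (reflw w x) = inner x x"
    unfolding reflw_def using ww
    by (simp add: inner_diff_left inner_diff_right inner_commute power2_eq_square field_simps)
  then show ?thesis by (simp add: norm_eq_sqrt_inner)
qed

lemma refl_invol: assumes "w \<noteq> 0" shows "reflw w (reflw w x) = x"
proof -
  have ww: "inner w w \<noteq> 0" using assms by simp
  have "inner (reflw w x) w = - inner x w"
    unfolding reflw_def using ww by (simp add: inner_diff_left field_simps)
  then show ?thesis unfolding reflw_def[of w "reflw w x"] by (simp add: reflw_def algebra_simps)
qed

lemma refl_cont: "continuous_on S (reflw w)"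
  unfolding reflw_def by (intro continuous_intros)

lemma refl_swap: assumes "norm u = 1" "norm v = 1" "u \<noteq> v" shows "reflw (u - v) u = v"
proof -
  have uu: "inner u u = 1" "inner v v = 1" using assms by (simp_all add: norm_eq_1)
  have w: "inner (u - v) (u - v) = 2 - 2 * inner u v"
    using uu by (simp add: inner_diff_left inner_diff_right inner_commute)
  have "u - v \<noteq> 0" using assms(3) by simp
  then have "inner (u - v) (u - v) \<noteq> 0" by simp
  then have ne: "2 - 2 * inner u v \<noteq> 0" using w by simp
  have i: "inner u (u - v) = 1 - inner u v" using uu by (simp add: inner_diff_right)
  have a: "(2 / (2 - 2 * a)) * (1 - a) = 1" if "2 - 2 * a \<noteq> 0" for a :: real
    using that by (simp add: field_simps)
  have e: "(2 / inner (u - v) (u - v)) * inner u (u - v) = 1" unfolding w i by (rule a[OF ne])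
  have "reflw (u - v) u = u - 1 *\<^sub>R (u - v)" unfolding reflw_def e ..
  then show ?thesis by simp
qed

lemma sphere_homog:
  fixes u v :: "'b::real_inner"
  assumes "u \<in> sphere 0 1" "v \<in> sphere 0 1"
  shows "\<exists>h h'. homeomorphism (sphere 0 1) (sphere 0 1) h h' \<and> h u = v"
proof (cases "u = v")
  case True then show ?thesis using homeomorphism_ident by blast
next
  case False
  let ?w = "u - v"
  have w: "?w \<noteq> 0" using False by simp
  have "homeomorphism (sphere 0 1) (sphere (0::'b) 1) (reflw ?w) (reflw ?w)"
  proof (rule homeomorphismI)
    show "continuous_on (sphere 0 1) (reflw ?w)" by (rule refl_cont)
    show "reflw ?w ` sphere 0 1 \<subseteq> sphere 0 1" using refl_norm[OF w] by auto
    show "\<And>x. x \<in> sphere 0 1 \<Longrightarrow> reflw ?w (reflw ?w x) = x" using refl_invol[OF w] by auto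
  qed (use refl_cont refl_norm[OF w] refl_invol[OF w] in auto)
  moreover have "reflw ?w u = v" using refl_swap False assms by auto
  ultimately show ?thesis by blast
qed

lemma homeomorphism_Times:
  assumes f: "homeomorphism S S' f f'" and g: "homeomorphism T T' g g'"
  shows "homeomorphism (S \<times> T) (S' \<times> T') (\<lambda>z. (f (fst z), g (snd z))) (\<lambda>z. (f' (fst z), g' (snd z)))"
proof -
  have cf: "continuous_on S f" "continuous_on S' f'" "f ` S = S'" "f' ` S' = S"
    "\<And>x. x \<in> S \<Longrightarrow> f' (f x) = x" "\<And>y. y \<in> S' \<Longrightarrow> f (f' y) = y"
    using f by (auto simp: homeomorphism_def)
  have cg: "continuous_on T g" "continuous_on T' g'" "g ` T = T'" "g' ` T' = T"
    "\<And>x. x \<in> T \<Longrightarrow> g' (g x) = x" "\<And>y. y \<in> T' \<Longrightarrow> g (g' y) = y"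
    using g by (auto simp: homeomorphism_def)
  show ?thesis
  proof (rule homeomorphismI)
    show "continuous_on (S \<times> T) (\<lambda>z. (f (fst z), g (snd z)))"
      by (intro continuous_on_Pair continuous_on_compose2[OF cf(1) continuous_on_fst]
          continuous_on_compose2[OF cg(1) continuous_on_snd] continuous_on_id) auto
    show "continuous_on (S' \<times> T') (\<lambda>z. (f' (fst z), g' (snd z)))"
      by (intro continuous_on_Pair continuous_on_compose2[OF cf(2) continuous_on_fst]
          continuous_on_compose2[OF cg(2) continuous_on_snd] continuous_on_id) auto
    show "(\<lambda>z. (f (fst z), g (snd z))) ` (S \<times> T) \<subseteq> S' \<times> T'" using cf cg by auto
    show "(\<lambda>z. (f' (fst z), g' (snd z))) ` (S' \<times> T') \<subseteq> S \<times> T" using cf cg by auto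
    show "\<And>x. x \<in> S \<times> T \<Longrightarrow> (f' (fst (f (fst x), g (snd x))), g' (snd (f (fst x), g (snd x)))) = x"
      using cf cg by auto
    show "\<And>y. y \<in> S' \<times> T' \<Longrightarrow> (f (fst (f' (fst y), g' (snd y))), g (snd (f' (fst y), g' (snd y)))) = y"
      using cf cg by auto
  qed
qed

lemma sphere2_homog:
  fixes u v :: "'b::real_inner \<times> 'b"
  assumes "u \<in> sphere 0 1 \<times> sphere 0 1" "v \<in> sphere 0 1 \<times> sphere 0 1"
  shows "\<exists>h h'. homeomorphism (sphere 0 1 \<times> sphere 0 1) (sphere 0 1 \<times> sphere 0 1) h h' \<and> h u = v"
proof -
  obtain h1 h1' where h1: "homeomorphism (sphere 0 1) (sphere (0::'b) 1) h1 h1'" "h1 (fst u) = fst v"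
    using sphere_homog[of "fst u" "fst v"] assms by (auto simp: mem_Times_iff)
  obtain h2 h2' where h2: "homeomorphism (sphere 0 1) (sphere (0::'b) 1) h2 h2'" "h2 (snd u) = snd v"
    using sphere_homog[of "snd u" "snd v"] assms by (auto simp: mem_Times_iff)
  show ?thesis
    using homeomorphism_Times[OF h1(1) h2(1)] h1(2) h2(2)
    by (intro exI[of _ "\<lambda>z. (h1 (fst z), h2 (snd z))"] exI[of _ "\<lambda>z. (h1' (fst z), h2' (snd z))"]) auto
qed

lemma chart_from_open:
  fixes \<Phi> :: "'a::metric_space \<Rightarrow> 'c::euclidean_space"
  assumes U: "openin (top_of_set M) U" and b: "b \<in> U" and h: "homeomorphism U E \<Phi> \<Phi>'"
    and cE: "convex E" and clE: "closed E"
  shows "\<exists>N. has_chart M b \<Phi> \<Phi>' N"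
proof -
  let ?B = "cball (\<Phi> b) 1 \<inter> E"
  let ?N = "\<Phi>' ` ?B"
  have hf: "continuous_on U \<Phi>" "continuous_on E \<Phi>'" "\<Phi> ` U = E" "\<Phi>' ` E = U"
    "\<And>x. x \<in> U \<Longrightarrow> \<Phi>' (\<Phi> x) = x" "\<And>y. y \<in> E \<Longrightarrow> \<Phi> (\<Phi>' y) = y"
    using h by (auto simp: homeomorphism_def)
  have bE: "\<Phi> b \<in> E" using hf b by auto
  have UM: "U \<subseteq> M" using openin_subset[OF U] by simp
  have NU: "?N \<subseteq> U" using hf by auto
  have imN: "\<Phi> ` ?N = ?B" using hf by (force simp: image_iff)
  show ?thesis unfolding has_chart_def
  proof (intro exI[of _ ?N] conjI)
    show "?N \<subseteq> M" using NU UM by auto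
    show "compact ?N"
      by (rule compact_continuous_image[OF continuous_on_subset[OF hf(2)]])
        (use compact_Int_closed[OF compact_cball clE] in auto)
    show "b \<in> ?N" using bE hf(5)[OF b] by (auto intro: image_eqI[of _ _ "\<Phi> b"])
    show "homeomorphism ?N (\<Phi> ` ?N) \<Phi> \<Phi>'"
      by (rule homeomorphism_of_subsets[OF h NU _ refl]) auto
    show "convex (\<Phi> ` ?N)" unfolding imN by (intro convex_Int convex_cball cE)
    show "\<forall>x\<in>?N. norm (\<Phi> x - \<Phi> b) \<le> 1"
      using imN by (force simp: dist_norm norm_minus_commute)
    have "{x\<in>?N. norm (\<Phi> x - \<Phi> b) < 1} = U \<inter> \<Phi> -` ball (\<Phi> b) 1"
    proof
      show "{x\<in>?N. norm (\<Phi> x - \<Phi> b) < 1} \<subseteq> U \<inter> \<Phi> -` ball (\<Phi> b) 1"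
        using NU by (auto simp: dist_norm norm_minus_commute)
      show "U \<inter> \<Phi> -` ball (\<Phi> b) 1 \<subseteq> {x\<in>?N. norm (\<Phi> x - \<Phi> b) < 1}"
      proof clarify
        fix x assume x: "x \<in> U" "\<Phi> x \<in> ball (\<Phi> b) 1"
        have "\<Phi> x \<in> ?B" using x hf(3) by auto
        then have "x \<in> ?N" using hf(5)[OF x(1)] by (metis image_eqI)
        then show "x \<in> ?N \<and> norm (\<Phi> x - \<Phi> b) < 1" using x by (simp add: dist_norm norm_minus_commute)
      qed
    qed
    moreover have "openin (top_of_set U) (U \<inter> \<Phi> -` ball (\<Phi> b) 1)"
      by (rule continuous_openin_preimage_gen[OF hf(1)]) simp
    ultimately show "openin (top_of_set M) {x\<in>?N. norm (\<Phi> x - \<Phi> b) < 1}"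
      using U openin_trans by metis
  qed
qed

lemma neg_ne: fixes b :: "'b::real_normed_vector" assumes "norm b = 1" shows "-b \<noteq> b"
proof
  assume "-b = b"
  then have "b + b = 0" by (metis add.right_inverse)
  then have "2 *\<^sub>R b = 0" by (simp add: scaleR_2)
  then show False using assms by simp
qed

lemma chart_sph2:
  fixes b :: "'b::euclidean_space \<times> 'b"
  assumes b: "b \<in> sphere 0 1 \<times> sphere 0 1"
  shows "\<exists>(\<phi>::'b \<times> 'b \<Rightarrow> 'b \<times> 'b) \<psi> N. has_chart (sphere 0 1 \<times> sphere 0 1) b \<phi> \<psi> N"
proof -
  obtain b1 b2 where bb: "b = (b1, b2)" "b1 \<in> sphere (0::'b) 1" "b2 \<in> sphere (0::'b) 1" using b by auto
  have n1: "b1 \<noteq> 0" "b2 \<noteq> 0" using bb by auto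
  have "(sphere (0::'b) 1 - {-b1}) homeomorphic {x. inner b1 x = 0}"
    by (rule homeomorphic_punctured_sphere_hyperplane) (use bb n1 in auto)
  then obtain f1 f1' where f1: "homeomorphism (sphere 0 1 - {-b1}) {x. inner b1 x = 0} f1 f1'"
    by (auto simp: homeomorphic_def)
  have "(sphere (0::'b) 1 - {-b2}) homeomorphic {x. inner b2 x = 0}"
    by (rule homeomorphic_punctured_sphere_hyperplane) (use bb n1 in auto)
  then obtain f2 f2' where f2: "homeomorphism (sphere 0 1 - {-b2}) {x. inner b2 x = 0} f2 f2'"
    by (auto simp: homeomorphic_def)
  let ?U = "(sphere (0::'b) 1 - {-b1}) \<times> (sphere 0 1 - {-b2})"
  have "?U = (sphere 0 1 \<times> sphere 0 1) \<inter> ((- {-b1}) \<times> (- {-b2}))" by auto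
  moreover have "open ((- {-b1}) \<times> (- {-b2}))" by (intro open_Times) auto
  ultimately have U: "openin (top_of_set (sphere 0 1 \<times> sphere 0 1)) ?U" by auto
  have bU: "b \<in> ?U" using bb neg_ne[of b1] neg_ne[of b2] by auto
  obtain N where N: "has_chart (sphere 0 1 \<times> sphere 0 1) b (\<lambda>z. (f1 (fst z), f2 (snd z))) (\<lambda>z. (f1' (fst z), f2' (snd z))) N"
    using chart_from_open[OF U bU homeomorphism_Times[OF f1 f2]
      convex_Times[OF convex_hyperplane convex_hyperplane] closed_Times[OF closed_hyperplane closed_hyperplane]]
    by (elim exE) blast
  show ?thesis by (intro exI) (rule N)
qed

lemma chart_sph1:
  fixes b :: "'b::euclidean_space"
  assumes b: "b \<in> sphere 0 1"
  shows "\<exists>(\<phi>::'b \<Rightarrow> 'b \<times> 'b) \<psi> N. has_chart (sphere 0 1) b \<phi> \<psi> N"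
proof -
  have n1: "b \<noteq> 0" using b by auto
  have "(sphere (0::'b) 1 - {-b}) homeomorphic {x. inner b x = 0}"
    by (rule homeomorphic_punctured_sphere_hyperplane) (use b n1 in auto)
  then obtain f1 f1' where f1: "homeomorphism (sphere 0 1 - {-b}) {x. inner b x = 0} f1 f1'"
    by (auto simp: homeomorphic_def)
  have e: "homeomorphism {x. inner b x = 0} ({x. inner b x = 0} \<times> {0::'b}) (\<lambda>x. (x, 0)) fst"
    by (rule homeomorphismI) (auto intro: continuous_intros)
  have U: "openin (top_of_set (sphere 0 1)) (sphere (0::'b) 1 - {-b})"
    using openin_open_Int[of "- {-b}" "sphere (0::'b) 1"] by (simp add: Diff_eq open_Compl)
  have bU: "b \<in> sphere 0 1 - {-b}" using b neg_ne[of b] by auto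
  obtain N where N: "has_chart (sphere 0 1) b ((\<lambda>x. (x, 0::'b)) \<circ> f1) (f1' \<circ> fst) N"
    using chart_from_open[OF U bU homeomorphism_compose[OF f1 e]
      convex_Times[OF convex_hyperplane convex_singleton] closed_Times[OF closed_hyperplane closed_singleton]]
    by (elim exE) blast
  show ?thesis by (intro exI) (rule N)
qed

lemma chart_transport:
  assumes h: "homeomorphism M K \<alpha> \<alpha>'" and c: "has_chart M b \<phi> \<psi> N"
  shows "has_chart K (\<alpha> b) (\<phi> \<circ> \<alpha>') (\<alpha> \<circ> \<psi>) (\<alpha> ` N)"
proof -
  have hc: "N \<subseteq> M" "compact N" "b \<in> N" "homeomorphism N (\<phi> ` N) \<phi> \<psi>" "convex (\<phi> ` N)"
    "\<forall>x\<in>N. norm (\<phi> x - \<phi> b) \<le> 1" "openin (top_of_set M) {x\<in>N. norm (\<phi> x - \<phi> b) < 1}"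
    using c by (auto simp: has_chart_def)
  have hf: "continuous_on M \<alpha>" "\<alpha> ` M = K" "\<And>x. x \<in> M \<Longrightarrow> \<alpha>' (\<alpha> x) = x"
    using h by (auto simp: homeomorphism_def)
  have ab: "\<alpha>' (\<alpha> b) = b" using hf hc by auto
  have inv: "\<And>y. y \<in> N \<Longrightarrow> \<alpha>' (\<alpha> y) = y" using hf(3) hc(1) by auto
  have img: "(\<phi> \<circ> \<alpha>') ` (\<alpha> ` N) = \<phi> ` N"
  proof -
    have "(\<phi> \<circ> \<alpha>') ` (\<alpha> ` N) = (\<lambda>x. \<phi> (\<alpha>' (\<alpha> x))) ` N" by (simp add: image_image)
    also have "\<dots> = \<phi> ` N" by (rule image_cong) (use inv in auto)
    finally show ?thesis .
  qed
  have aa: "\<alpha>' ` \<alpha> ` N = N"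
  proof -
    have "\<alpha>' ` \<alpha> ` N = (\<lambda>x. \<alpha>' (\<alpha> x)) ` N" by (simp add: image_image)
    also have "\<dots> = (\<lambda>x. x) ` N" by (rule image_cong) (use hf(3) hc(1) in auto)
    finally show ?thesis by simp
  qed
  have hN: "homeomorphism (\<alpha> ` N) N \<alpha>' \<alpha>"
    by (rule homeomorphism_of_subsets[OF homeomorphism_symD[OF h] _ _ aa]) (use hc hf in auto)
  have eqset: "{x\<in>\<alpha> ` N. norm ((\<phi> \<circ> \<alpha>') x - (\<phi> \<circ> \<alpha>') (\<alpha> b)) < 1} = \<alpha> ` {x\<in>N. norm (\<phi> x - \<phi> b) < 1}"
  proof
    show "{x\<in>\<alpha> ` N. norm ((\<phi> \<circ> \<alpha>') x - (\<phi> \<circ> \<alpha>') (\<alpha> b)) < 1} \<subseteq> \<alpha> ` {x\<in>N. norm (\<phi> x - \<phi> b) < 1}"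
    proof
      fix x assume x: "x \<in> {x\<in>\<alpha> ` N. norm ((\<phi> \<circ> \<alpha>') x - (\<phi> \<circ> \<alpha>') (\<alpha> b)) < 1}"
      then obtain y where y: "x = \<alpha> y" "y \<in> N" by auto
      then have "norm (\<phi> y - \<phi> b) < 1" using x inv[OF y(2)] ab by simp
      then show "x \<in> \<alpha> ` {x\<in>N. norm (\<phi> x - \<phi> b) < 1}" using y by blast
    qed
    show "\<alpha> ` {x\<in>N. norm (\<phi> x - \<phi> b) < 1} \<subseteq> {x\<in>\<alpha> ` N. norm ((\<phi> \<circ> \<alpha>') x - (\<phi> \<circ> \<alpha>') (\<alpha> b)) < 1}"
    proof
      fix x assume "x \<in> \<alpha> ` {x\<in>N. norm (\<phi> x - \<phi> b) < 1}"
      then obtain y where y: "x = \<alpha> y" "y \<in> N" "norm (\<phi> y - \<phi> b) < 1" by auto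
      then show "x \<in> {x\<in>\<alpha> ` N. norm ((\<phi> \<circ> \<alpha>') x - (\<phi> \<circ> \<alpha>') (\<alpha> b)) < 1}"
        using inv[OF y(2)] ab by simp
    qed
  qed
  show ?thesis unfolding has_chart_def
  proof (intro conjI)
    show "\<alpha> ` N \<subseteq> K" using hc hf by auto
    show "compact (\<alpha> ` N)" using hc hf by (auto intro: compact_continuous_image continuous_on_subset)
    show "\<alpha> b \<in> \<alpha> ` N" using hc by auto
    show "homeomorphism (\<alpha> ` N) ((\<phi> \<circ> \<alpha>') ` \<alpha> ` N) (\<phi> \<circ> \<alpha>') (\<alpha> \<circ> \<psi>)"
      unfolding img by (rule homeomorphism_compose[OF hN hc(4)])
    show "convex ((\<phi> \<circ> \<alpha>') ` \<alpha> ` N)" unfolding img by (rule hc(5))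
    show "\<forall>x\<in>\<alpha> ` N. norm ((\<phi> \<circ> \<alpha>') x - (\<phi> \<circ> \<alpha>') (\<alpha> b)) \<le> 1"
      using hc(6,1) hf(3) ab by auto
    show "openin (top_of_set K) {x\<in>\<alpha> ` N. norm ((\<phi> \<circ> \<alpha>') x - (\<phi> \<circ> \<alpha>') (\<alpha> b)) < 1}"
      unfolding eqset by (rule homeomorphism_imp_open_map[OF h hc(7)])
  qed
qed

lemma pair_ok:
  fixes K L :: "'a::euclidean_space set" and M :: "'m::euclidean_space set"
  assumes homog: "\<And>u v. u \<in> M \<Longrightarrow> v \<in> M \<Longrightarrow> \<exists>h h'. homeomorphism M M h h' \<and> h u = v"
    and charts: "\<And>b. b \<in> M \<Longrightarrow> \<exists>(\<phi>::'m \<Rightarrow> 'c::real_normed_vector) \<psi> N. has_chart M b \<phi> \<psi> N"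
    and KM: "K homeomorphic M" and LM: "L homeomorphic M" and x: "x \<in> K" and y: "y \<in> L"
  shows "\<exists>\<theta> \<theta>' (\<phi>::'a \<Rightarrow> 'c) \<psi> N. homeomorphism K L \<theta> \<theta>' \<and> \<theta> x = y \<and> has_chart K x \<phi> \<psi> N"
proof -
  obtain \<alpha> \<alpha>' where a: "homeomorphism M K \<alpha> \<alpha>'" using KM unfolding homeomorphic_def by (blast dest: homeomorphism_symD)
  obtain \<beta> \<beta>' where b: "homeomorphism M L \<beta> \<beta>'" using LM unfolding homeomorphic_def by (blast dest: homeomorphism_symD)
  have ax: "\<alpha>' x \<in> M" "\<alpha> (\<alpha>' x) = x" using a x by (auto simp: homeomorphism_def)
  have by': "\<beta>' y \<in> M" "\<beta> (\<beta>' y) = y" using b y by (auto simp: homeomorphism_def)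
  obtain h h' where h: "homeomorphism M M h h'" "h (\<alpha>' x) = \<beta>' y" using homog[OF ax(1) by'(1)] by blast
  have H: "homeomorphism K L (\<beta> \<circ> (h \<circ> \<alpha>')) ((\<alpha> \<circ> h') \<circ> \<beta>')"
    by (rule homeomorphism_compose[OF homeomorphism_compose[OF homeomorphism_symD[OF a] h(1)] b])
  obtain \<phi> \<psi> N where c: "has_chart M (\<alpha>' x) (\<phi>::'m \<Rightarrow> 'c) \<psi> N" using charts[OF ax(1)] by blast
  have "has_chart K x (\<phi> \<circ> \<alpha>') (\<alpha> \<circ> \<psi>) (\<alpha> ` N)"
    using chart_transport[OF a c] ax(2) by simp
  moreover have "(\<beta> \<circ> (h \<circ> \<alpha>')) x = y" using h(2) by' by simp
  ultimately show ?thesis using H by blast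
qed

lemma assemble:
  fixes F :: "nat \<Rightarrow> 'a::euclidean_space set \<Rightarrow> bool" and W V :: "'a set"
  assumes cw: "compact_wedge F W" and ab: "arc_bouquet F V"
    and good: "\<And>j X Y x y. 1 \<le> j \<Longrightarrow> F j X \<Longrightarrow> F j Y \<Longrightarrow> x \<in> X \<Longrightarrow> y \<in> Y \<Longrightarrow>
       compact X \<and> (\<exists>\<theta> \<theta>' (\<phi>::'a \<Rightarrow> 'c::euclidean_space) \<psi> N. homeomorphism X Y \<theta> \<theta>' \<and> \<theta> x = y \<and> has_chart X x \<phi> \<psi> N)"
  shows "W homotopy_eqv V"
proof -
  obtain K where K: "\<forall>j\<ge>1. F j (K j) \<and> 0 \<in> K j" "\<forall>i\<ge>1. \<forall>j\<ge>1. i \<noteq> j \<longrightarrow> K i \<inter> K j = {0}"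
    "(\<lambda>j. diameter (K j)) \<longlonglongrightarrow> 0" "W = (\<Union>j\<in>{1..}. K j)"
    using cw unfolding compact_wedge_def by blast
  obtain g t L where gtL: "arc g" "t 1 = 0" "\<forall>i\<ge>1. t i < t (Suc i)" "t \<longlonglongrightarrow> 1"
    "\<forall>j\<ge>1. F j (L j) \<and> L j \<inter> path_image g = {g (t j)}"
    "\<forall>i\<ge>1. \<forall>j\<ge>1. i \<noteq> j \<longrightarrow> L i \<inter> L j = {}"
    "(\<lambda>j. diameter (L j)) \<longlonglongrightarrow> 0" "V = path_image g \<union> (\<Union>j\<in>{1..}. L j)"
    using ab unfolding arc_bouquet_def by blast
  define Q where "Q j q \<longleftrightarrow> homeomorphism (K j) (L j) (fst q) (fst (snd q)) \<and> fst q 0 = g (t j) \<and>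
      has_chart (K j) 0 (fst (snd (snd q)) :: 'a \<Rightarrow> 'c) (fst (snd (snd (snd q)))) (snd (snd (snd (snd q))))" for j q
  have "\<forall>j. \<exists>q. 1 \<le> j \<longrightarrow> Q j q"
  proof
    fix j :: nat
    show "\<exists>q. 1 \<le> j \<longrightarrow> Q j q"
    proof (cases "1 \<le> j")
      case True
      have p: "g (t j) \<in> L j" using gtL(5) True by auto
      obtain \<theta> \<theta>' \<phi> \<psi> N where "homeomorphism (K j) (L j) \<theta> \<theta>'" "\<theta> 0 = g (t j)" "has_chart (K j) 0 (\<phi>::'a \<Rightarrow> 'c) \<psi> N"
        using good[OF True, of "K j" "L j" 0 "g (t j)"] K(1) gtL(5) True p by blast
      then have "Q j (\<theta>, \<theta>', \<phi>, \<psi>, N)" by (simp add: Q_def)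
      then show ?thesis by blast
    qed simp
  qed
  then obtain q where q: "\<And>j. 1 \<le> j \<Longrightarrow> Q j (q j)" by metis
  have Kc: "\<And>j. 1 \<le> j \<Longrightarrow> compact (K j)" using good K(1) by blast
  interpret bq K L g t "\<lambda>j. fst (q j)" "\<lambda>j. fst (snd (q j))" "\<lambda>j. fst (snd (snd (q j)))"
    "\<lambda>j. fst (snd (snd (snd (q j))))" "\<lambda>j. snd (snd (snd (snd (q j))))"
  proof
    show "\<And>j. 1 \<le> j \<Longrightarrow> 0 \<in> K j" using K(1) by auto
    show "\<And>j. 1 \<le> j \<Longrightarrow> compact (K j)" by (rule Kc)
    show "\<And>i j. 1 \<le> i \<Longrightarrow> 1 \<le> j \<Longrightarrow> i \<noteq> j \<Longrightarrow> K i \<inter> K j = {0}" using K(2) by auto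
    show "(\<lambda>j. diameter (K j)) \<longlonglongrightarrow> 0" by (rule K(3))
    show "arc g" "t 1 = 0" "t \<longlonglongrightarrow> 1" using gtL by auto
    show "\<And>i. 1 \<le> i \<Longrightarrow> t i < t (Suc i)" using gtL(3) by auto
    show "\<And>j. 1 \<le> j \<Longrightarrow> L j \<inter> path_image g = {g (t j)}" using gtL(5) by auto
    show "\<And>i j. 1 \<le> i \<Longrightarrow> 1 \<le> j \<Longrightarrow> i \<noteq> j \<Longrightarrow> L i \<inter> L j = {}" using gtL(6) by auto
    show "(\<lambda>j. diameter (L j)) \<longlonglongrightarrow> 0" by (rule gtL(7))
    show "\<And>j. 1 \<le> j \<Longrightarrow> homeomorphism (K j) (L j) (fst (q j)) (fst (snd (q j)))" using q by (simp add: Q_def)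
    show "\<And>j. 1 \<le> j \<Longrightarrow> fst (q j) 0 = g (t j)" using q by (simp add: Q_def)
    show "\<And>j. 1 \<le> j \<Longrightarrow> has_chart (K j) 0 (fst (snd (snd (q j)))) (fst (snd (snd (snd (q j))))) (snd (snd (snd (snd (q j)))))"
      using q by (simp add: Q_def)
  qed
  show ?thesis using W_heqv_V K(4) gtL(8) by (simp add: W_def V_def A_def)
qed

lemma good_sph2:
  fixes X Y :: "'a::euclidean_space set"
  assumes "X homeomorphic (sphere (0::'b::euclidean_space) 1 \<times> sphere (0::'b) 1)"
    "Y homeomorphic (sphere (0::'b) 1 \<times> sphere (0::'b) 1)" "x \<in> X" "y \<in> Y"
  shows "compact X \<and> (\<exists>\<theta> \<theta>' (\<phi>::'a \<Rightarrow> 'b \<times> 'b) \<psi> N. homeomorphism X Y \<theta> \<theta>' \<and> \<theta> x = y \<and> has_chart X x \<phi> \<psi> N)"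
proof
  show "compact X" using assms(1) homeomorphic_compactness compact_Times[OF compact_sphere compact_sphere] by blast
  show "\<exists>\<theta> \<theta>' (\<phi>::'a \<Rightarrow> 'b \<times> 'b) \<psi> N. homeomorphism X Y \<theta> \<theta>' \<and> \<theta> x = y \<and> has_chart X x \<phi> \<psi> N"
    by (rule pair_ok[OF sphere2_homog chart_sph2 assms])
qed

lemma good_sph1:
  fixes X Y :: "'a::euclidean_space set"
  assumes "X homeomorphic (sphere (0::'b::euclidean_space) 1)"
    "Y homeomorphic (sphere (0::'b) 1)" "x \<in> X" "y \<in> Y"
  shows "compact X \<and> (\<exists>\<theta> \<theta>' (\<phi>::'a \<Rightarrow> 'b \<times> 'b) \<psi> N. homeomorphism X Y \<theta> \<theta>' \<and> \<theta> x = y \<and> has_chart X x \<phi> \<psi> N)"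
proof
  show "compact X" using assms(1) homeomorphic_compactness compact_sphere by blast
  show "\<exists>\<theta> \<theta>' (\<phi>::'a \<Rightarrow> 'b \<times> 'b) \<psi> N. homeomorphism X Y \<theta> \<theta>' \<and> \<theta> x = y \<and> has_chart X x \<phi> \<psi> N"
    by (rule pair_ok[OF sphere_homog chart_sph1 assms])
qed

theorem proposition3p9:
  fixes n :: nat
    and S0 S1 WS0 WS1 :: "'a::euclidean_space set"
  assumes "n \<ge> 1"
    and "DIM('a) = 2 * n + 2"
    and "DIM('b::euclidean_space) = n + 1"
    and "compact_wedge (\<lambda>j X. X homeomorphic (sphere (0::'b) 1 \<times> sphere (0::'b) 1)) S0"
    and "compact_wedge (\<lambda>j X. if j = 1 then X homeomorphic sphere (0::'b) 1
                              else X homeomorphic (sphere (0::'b) 1 \<times> sphere (0::'b) 1)) S1"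
    and "arc_bouquet (\<lambda>j X. X homeomorphic (sphere (0::'b) 1 \<times> sphere (0::'b) 1)) WS0"
    and "arc_bouquet (\<lambda>j X. if j = 1 then X homeomorphic sphere (0::'b) 1
                             else X homeomorphic (sphere (0::'b) 1 \<times> sphere (0::'b) 1)) WS1"
  shows "S0 homotopy_eqv WS0 \<and> S1 homotopy_eqv WS1"
proof
  show "S0 homotopy_eqv WS0"
    by (rule assemble[where 'c = "'b \<times> 'b", OF assms(4) assms(6) good_sph2])
  show "S1 homotopy_eqv WS1"
  proof (rule assemble[where 'c = "'b \<times> 'b", OF assms(5) assms(7)])
    fix j and X Y :: "'a set" and x y
    assume "1 \<le> j" and XY: "(if j = 1 then X homeomorphic sphere (0::'b) 1 else X homeomorphic (sphere (0::'b) 1 \<times> sphere (0::'b) 1))"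
      "(if j = 1 then Y homeomorphic sphere (0::'b) 1 else Y homeomorphic (sphere (0::'b) 1 \<times> sphere (0::'b) 1))"
      and xy: "x \<in> X" "y \<in> Y"
    show "compact X \<and> (\<exists>\<theta> \<theta>' (\<phi>::'a \<Rightarrow> 'b \<times> 'b) \<psi> N. homeomorphism X Y \<theta> \<theta>' \<and> \<theta> x = y \<and> has_chart X x \<phi> \<psi> N)"
    proof (cases "j = 1")
      case True then show ?thesis using good_sph1[of X Y x y] XY xy by auto
    next
      case False then show ?thesis using good_sph2[of X Y x y] XY xy by auto
    qed
  qed
qed

end
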